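(* Let $M$ be a manifold, $M_0=\emptyset$, and $X=S^{2l}$ an even-dimensional sphere with $l\ge1$. Let $C=C(M,\emptyset;S^{2l})$ and $V=\bigvee_{k\ge1}D_k$. Then the maps $\Phi,\Psi:V\to\mathrm{SP}(V\wedge V)$ are based homotopic.
   Context: $C(M,M_0;X)$ (for a based space $(X,x_0)$) is the space of finite labelled configurations $\xi_I=\{(m_i,x_i)\}_{i\in I}$ ($m_i\in M$ pairwise distinct, $x_i\in X$) modulo the relation generated by $\xi_I\sim\xi_I\cup\{(m,x)\}$ whenever $m\in M_0$ or $x=x_0$; $\xi_J=\{(m_i,x_i)\}_{i\in J}$ for $J\subseteq I$. $C_k$ is the subspace of configurations of at most $k$ points, $D_k=C_k/C_{k-1}$ based at the collapsed point $\infty$, and $V=\bigvee_{k\ge1}D_k$. For a based space $(Y,e)$, $\mathrm{SP}(Y)$ is the free unital abelian monoid on $Y$ with identity $e$, based at $e$. The maps are $\Phi(\xi_I)=\sum_{I=A\sqcup B}(\xi_A,\xi_B)$ (sum over ordered decompositions of $I$ into disjoint subsets $A,B$) and $\Psi(\xi_I)=\sum_{A,B\subseteq I,\ A\cup B=I}(\xi_A,\xi_B)$, where $(\xi_A,\xi_B)\in D_{|A|}\wedge D_{|B|}\subseteq V\wedge V$. *)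

theory Defs
  imports "HOL-Analysis.Analysis" "HOL-Library.Multiset"
begin

definition quotient_topology :: "'a topology \<Rightarrow> ('a \<Rightarrow> 'b) \<Rightarrow> 'b topology" where
  "quotient_topology T q =
     topology (\<lambda>U. U \<subseteq> q ` topspace T \<and> openin T {x \<in> topspace T. q x \<in> U})"

definition topological_manifold :: "'m topology \<Rightarrow> nat \<Rightarrow> bool" where
  "topological_manifold M n \<longleftrightarrow>
     Hausdorff_space M \<and> second_countable M \<and>
     (\<forall>p \<in> topspace M. \<exists>U W. openin M U \<and> p \<in> U \<and> openin (Euclidean_space n) W \<and>
         subtopology M U homeomorphic_space subtopology (Euclidean_space n) W)"

text \<open>Disjoint union over k of the spaces of k-tuples of labelled points with pairwise
  distinct positions: a point (k, f) stands for the tuple f 0, ..., f (k-1).\<close>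
definition labelled_tuples :: "'m topology \<Rightarrow> 'x topology \<Rightarrow> (nat \<times> (nat \<Rightarrow> 'm \<times> 'x)) topology" where
  "labelled_tuples M X =
     subtopology (sum_topology (\<lambda>k. product_topology (\<lambda>i. prod_topology M X) {..<k}) UNIV)
       {(k, f). inj_on (fst \<circ> f) {..<k}}"

text \<open>Reduced representative of the configuration (M_0 empty): drop points labelled x0.\<close>
definition conf_of :: "'x \<Rightarrow> nat \<times> (nat \<Rightarrow> 'm \<times> 'x) \<Rightarrow> ('m \<times> 'x) set" where
  "conf_of x0 = (\<lambda>(k, f). {f i | i. i < k \<and> snd (f i) \<noteq> x0})"

definition conf_space :: "'m topology \<Rightarrow> 'x topology \<Rightarrow> 'x \<Rightarrow> ('m \<times> 'x) set topology" where
  "conf_space M X x0 = quotient_topology (labelled_tuples M X) (conf_of x0)"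

definition conf_filt :: "'m topology \<Rightarrow> 'x topology \<Rightarrow> 'x \<Rightarrow> nat \<Rightarrow> ('m \<times> 'x) set topology" where
  "conf_filt M X x0 k = subtopology (conf_space M X x0) {\<xi> \<in> topspace (conf_space M X x0). card \<xi> \<le> k}"

text \<open>D_k = C_k / C_(k-1); the collapsed point is None, a configuration of exactly k points is Some.\<close>
definition conf_quot :: "'m topology \<Rightarrow> 'x topology \<Rightarrow> 'x \<Rightarrow> nat \<Rightarrow> ('m \<times> 'x) set option topology" where
  "conf_quot M X x0 k =
     quotient_topology (conf_filt M X x0 k) (\<lambda>\<xi>. if card \<xi> = k then Some \<xi> else None)"

text \<open>V = wedge over k \<ge> 1 of D_k (base points, all None, identified).\<close>
definition wedge_V :: "'m topology \<Rightarrow> 'x topology \<Rightarrow> 'x \<Rightarrow> ('m \<times> 'x) set option topology" where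
  "wedge_V M X x0 = quotient_topology (sum_topology (conf_quot M X x0) {1..}) snd"

definition smash_map :: "'a option \<times> 'b option \<Rightarrow> ('a \<times> 'b) option" where
  "smash_map = (\<lambda>(a, b). case a of None \<Rightarrow> None
                   | Some a' \<Rightarrow> (case b of None \<Rightarrow> None | Some b' \<Rightarrow> Some (a', b')))"

definition smash :: "'a option topology \<Rightarrow> 'b option topology \<Rightarrow> ('a \<times> 'b) option topology" where
  "smash Y Z = quotient_topology (prod_topology Y Z) smash_map"

text \<open>Infinite symmetric product SP(Y) of the based space (Y, e): finite multisets of
  non-base points (the base point is the identity), with the colimit (identification)
  topology coming from the spaces Y^n.\<close>
definition SP :: "'a topology \<Rightarrow> 'a \<Rightarrow> 'a multiset topology" where
  "SP Y e = quotient_topology (sum_topology (\<lambda>n. product_topology (\<lambda>i. Y) {..<n}) UNIV)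
              (\<lambda>(n, f). mset (filter (\<lambda>y. y \<noteq> e) (map f [0..<n])))"

text \<open>The maps Phi and Psi (terms with an empty part lie in D_0, not in V, so they are
  base points of V smash V, i.e. identities in SP).\<close>
definition Phi_map :: "('m \<times> 'x) set option \<Rightarrow> (('m \<times> 'x) set \<times> ('m \<times> 'x) set) option multiset" where
  "Phi_map v = (case v of None \<Rightarrow> {#}
     | Some \<xi> \<Rightarrow> mset_set (Some ` {(A, B). A \<union> B = \<xi> \<and> A \<inter> B = {} \<and> A \<noteq> {} \<and> B \<noteq> {}}))"

definition Psi_map :: "('m \<times> 'x) set option \<Rightarrow> (('m \<times> 'x) set \<times> ('m \<times> 'x) set) option multiset" where
  "Psi_map v = (case v of None \<Rightarrow> {#}
     | Some \<xi> \<Rightarrow> mset_set (Some ` {(A, B). A \<union> B = \<xi> \<and> A \<noteq> {} \<and> B \<noteq> {}}))"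

end

theory Submission
  imports Defs
begin


definition ipr :: "nat \<Rightarrow> (nat \<Rightarrow> real) \<Rightarrow> (nat \<Rightarrow> real) \<Rightarrow> real" where
  "ipr d x y = (\<Sum>i\<le>d. x i * y i)"

lemma topspace_nsphere_iff:
  "x \<in> topspace (nsphere d) \<longleftrightarrow> ipr d x x = 1 \<and> (\<forall>i>d. x i = 0)"
  by (simp add: nsphere ipr_def power2_eq_square)

lemma ipr_sym: "ipr d x y = ipr d y x"
  by (simp add: ipr_def mult.commute)

lemma ipr_bound:
  assumes "ipr d x x = 1" "ipr d y y = 1"
  shows "ipr d x y \<le> 1" "-1 \<le> ipr d x y"
proof -
  have "0 \<le> (\<Sum>i\<le>d. (x i - y i)^2)" by (simp add: sum_nonneg)
  also have "\<dots> = ipr d x x + ipr d y y - 2 * ipr d x y"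
    by (simp add: ipr_def power2_eq_square algebra_simps sum.distrib sum_subtractf sum_distrib_left)
  finally show "ipr d x y \<le> 1" using assms by simp
  have "0 \<le> (\<Sum>i\<le>d. (x i + y i)^2)" by (simp add: sum_nonneg)
  also have "\<dots> = ipr d x x + ipr d y y + 2 * ipr d x y"
    by (simp add: ipr_def power2_eq_square algebra_simps sum.distrib sum_subtractf sum_distrib_left)
  finally show "-1 \<le> ipr d x y" using assms by simp
qed

lemma sum_sq_expand3:
  "(\<Sum>i\<le>d. (a * u i + b * v i + c * z i)^2) =
     a^2 * ipr d u u + b^2 * ipr d v v + c^2 * ipr d z z
     + 2*a*b * ipr d u v + 2*a*c * ipr d u z + 2*b*c * ipr d v z"
  by (simp add: ipr_def power2_eq_square algebra_simps sum.distrib sum_distrib_left)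

lemma ipr_lin3:
  "ipr d (\<lambda>i. a * u i + b * v i + c * z i) y = a * ipr d u y + b * ipr d v y + c * ipr d z y"
  by (simp add: ipr_def algebra_simps sum.distrib sum_distrib_left)


definition alph :: "nat \<Rightarrow> (nat \<Rightarrow> real) \<Rightarrow> real \<Rightarrow> (nat \<Rightarrow> real) \<Rightarrow> (nat \<Rightarrow> real)" where
  "alph d x0 t x = (let p = ipr d x x0; a = p + t/2; b = 1 - t * min 1 (p+1)
      in (\<lambda>i. ((a - b*p) * x0 i + b * x i) / sqrt (a^2 + b^2 * (1 - p^2))))"

lemma alph_denom_pos:
  fixes p t :: real
  assumes "-1 \<le> p" "p \<le> 1" "0 \<le> t" "t \<le> 1"
  shows "0 < (p + t/2)^2 + (1 - t * min 1 (p+1))^2 * (1 - p^2)"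
proof (cases "1 - t * min 1 (p+1) = 0 \<or> p = 1 \<or> p = -1")
  case True
  then have "p + t/2 \<noteq> 0"
  proof
    assume h: "1 - t * min 1 (p+1) = 0"
    have "t * min 1 (p+1) \<le> t" using mult_left_le[of "min 1 (p+1)" t] assms by simp
    hence "t = 1" using h assms by linarith
    with h have "p \<ge> 0" by (auto simp: min_def split: if_splits)
    thus ?thesis using \<open>t = 1\<close> by simp
  qed (use assms in auto)
  moreover have "0 \<le> (1 - t * min 1 (p+1))^2 * (1 - p^2)"
    using assms by (intro mult_nonneg_nonneg) (auto simp: abs_square_le_1)
  ultimately show ?thesis by (simp add: add_pos_nonneg)
next
  case False
  then have "-1 < p" "p < 1" using assms by auto
  then have "0 < (1-p)*(1+p)" by (intro mult_pos_pos) auto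
  then have "0 < 1 - p^2" by (simp add: power2_eq_square algebra_simps)
  moreover have "0 < (1 - t * min 1 (p+1))^2" using False by simp
  ultimately have "0 < (1 - t * min 1 (p+1))^2 * (1 - p^2)" by simp
  thus ?thesis by (simp add: add_nonneg_pos)
qed

lemma alph_in:
  assumes x: "x \<in> topspace (nsphere d)" and x0: "x0 \<in> topspace (nsphere d)" and t: "0 \<le> t" "t \<le> 1"
  shows "alph d x0 t x \<in> topspace (nsphere d)"
proof -
  define p where "p = ipr d x x0"
  define a where "a = p + t/2"
  define b where "b = 1 - t * min 1 (p+1)"
  define s where "s = sqrt (a^2 + b^2 * (1 - p^2))"
  have xx: "ipr d x x = 1" and x0x0: "ipr d x0 x0 = 1" and z: "\<forall>i>d. x i = 0" "\<forall>i>d. x0 i = 0"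
    using x x0 by (auto simp: topspace_nsphere_iff)
  have pb: "-1 \<le> p" "p \<le> 1" using ipr_bound[OF xx x0x0] by (auto simp: p_def)
  have pos: "0 < a^2 + b^2 * (1 - p^2)" unfolding a_def b_def by (rule alph_denom_pos) (use pb t in auto)
  have s2: "s^2 = a^2 + b^2 * (1 - p^2)" using pos by (simp add: s_def)
  have spos: "s > 0" using pos by (simp add: s_def)
  have eq: "alph d x0 t x = (\<lambda>i. ((a - b*p)/s) * x0 i + (b/s) * x i + 0 * x i)"
    by (simp add: alph_def Let_def p_def a_def b_def s_def add_divide_distrib)
  define c1 where "c1 = (a - b*p)/s"
  define c2 where "c2 = b/s"
  have eq': "alph d x0 t x = (\<lambda>i. c1 * x0 i + c2 * x i + 0 * x i)" by (simp add: eq c1_def c2_def)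
  have "ipr d (alph d x0 t x) (alph d x0 t x) = (\<Sum>i\<le>d. (c1 * x0 i + c2 * x i + 0 * x i)^2)"
    unfolding eq' ipr_def power2_eq_square ..
  also have "\<dots> = c1^2 * ipr d x0 x0 + c2^2 * ipr d x x + 0^2 * ipr d x x
     + 2*c1*c2 * ipr d x0 x + 2*c1*0 * ipr d x0 x + 2*c2*0 * ipr d x x"
    by (rule sum_sq_expand3)
  also have "\<dots> = ((a - b*p)/s)^2 + (b/s)^2 + 2 * ((a - b*p)/s) * (b/s) * p"
    by (simp add: xx x0x0 ipr_sym[of d x0 x] p_def c1_def c2_def)
  also have "\<dots> = (a^2 + b^2 * (1 - p^2)) / s^2"
    using spos by (simp add: field_simps power2_eq_square)
  also have "\<dots> = 1" using s2 pos by simp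
  finally show ?thesis using z by (simp add: topspace_nsphere_iff eq)
qed

lemma alph_0:
  assumes x: "x \<in> topspace (nsphere d)"
  shows "alph d x0 0 x = x"
  using x by (simp add: alph_def topspace_nsphere_iff)

lemma alph_1:
  assumes x0: "x0 \<in> topspace (nsphere d)" and "0 \<le> ipr d x x0"
  shows "alph d x0 1 x = x0"
proof -
  have "1 - min 1 (ipr d x x0 + 1) = 0" using assms(2) by simp
  moreover have "ipr d x x0 + 1/2 > 0" using assms(2) by simp
  ultimately show ?thesis by (simp add: alph_def Let_def)
qed

lemma alph_base:
  assumes x0: "x0 \<in> topspace (nsphere d)" and t: "0 \<le> t"
  shows "alph d x0 t x0 = x0"
proof -
  have p: "ipr d x0 x0 = 1" using x0 by (simp add: topspace_nsphere_iff)
  have "1 + t/2 > 0" using t by simp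
  then have sq: "sqrt ((1 + t/2)^2) = 1 + t/2" by simp
  show ?thesis
  proof
    fix i
    have "alph d x0 t x0 i = ((1 + t/2 - (1 - t * min 1 (1+1)) * 1) * x0 i + (1 - t * min 1 (1+1)) * x0 i)
           / sqrt ((1 + t/2)^2 + (1 - t * min 1 (1+1))^2 * (1 - 1^2))"
      by (simp add: alph_def Let_def p)
    also have "\<dots> = ((1 + t/2) * x0 i) / sqrt ((1 + t/2)^2)"
      by (simp add: algebra_simps)
    also have "\<dots> = x0 i" using \<open>1 + t/2 > 0\<close> by (simp only: sq) simp
    finally show "alph d x0 t x0 i = x0 i" .
  qed
qed

lemma cm_fst_real: "continuous_map (prod_topology (top_of_set S) Y) euclideanreal fst"
  using continuous_map_fst[of "top_of_set S" Y] continuous_map_into_fulltopology by blast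

lemma cm_coord: "continuous_map (prod_topology T (nsphere d)) euclideanreal (\<lambda>z. snd z i)"
  using continuous_map_compose[OF continuous_map_snd continuous_map_nsphere_projection]
  by (simp add: o_def)

lemma cm_ipr: "continuous_map (prod_topology T (nsphere d)) euclideanreal (\<lambda>z. ipr d (snd z) y)"
  unfolding ipr_def by (intro continuous_map_sum continuous_map_real_mult cm_coord continuous_map_canonical_const) auto

lemma cm_into_nsphere:
  assumes "\<And>i. continuous_map Z euclideanreal (\<lambda>z. g z i)"
    and "\<And>z. z \<in> topspace Z \<Longrightarrow> g z \<in> topspace (nsphere d)"
  shows "continuous_map Z (nsphere d) g"
proof -
  have "continuous_map Z (powertop_real UNIV) g"
    using assms(1) by (simp add: continuous_map_componentwise_UNIV)
  moreover have "g \<in> topspace Z \<rightarrow> {x. (\<Sum>i\<le>d. x i ^ 2) = 1 \<and> (\<forall>i>d. x i = 0)}"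
    using assms(2) by (auto simp: nsphere)
  ultimately show ?thesis by (simp add: nsphere continuous_map_in_subtopology)
qed

lemma topspace_I_sphere:
  "z \<in> topspace (prod_topology (top_of_set {0..1::real}) (nsphere d)) \<longleftrightarrow>
     fst z \<in> {0..1} \<and> snd z \<in> topspace (nsphere d)"
  by (cases z) auto

lemma alph_cont:
  assumes x0: "x0 \<in> topspace (nsphere d)"
  shows "continuous_map (prod_topology (top_of_set {0..1::real}) (nsphere d)) (nsphere d)
            (\<lambda>z. alph d x0 (fst z) (snd z))"
proof (rule cm_into_nsphere)
  fix z assume "z \<in> topspace (prod_topology (top_of_set {0..1::real}) (nsphere d))"
  then show "alph d x0 (fst z) (snd z) \<in> topspace (nsphere d)"
    using alph_in x0 by (auto simp: topspace_I_sphere)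
next
  fix i
  let ?Z = "prod_topology (top_of_set {0..1::real}) (nsphere d)"
  have pos: "0 < (ipr d (snd z) x0 + fst z/2)^2 + (1 - fst z * min 1 (ipr d (snd z) x0+1))^2 * (1 - (ipr d (snd z) x0)^2)"
    if "z \<in> topspace ?Z" for z
  proof -
    have "snd z \<in> topspace (nsphere d)" "fst z \<in> {0..1}" using that by (auto simp: topspace_I_sphere)
    then have "-1 \<le> ipr d (snd z) x0" "ipr d (snd z) x0 \<le> 1" "0 \<le> fst z" "fst z \<le> 1"
      using ipr_bound[of d "snd z" x0] x0 by (auto simp: topspace_nsphere_iff)
    then show ?thesis by (rule alph_denom_pos)
  qed
  show "continuous_map ?Z euclideanreal (\<lambda>z. alph d x0 (fst z) (snd z) i)"
    unfolding alph_def Let_def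
    apply (intro continuous_map_real_divide continuous_map_add continuous_map_diff continuous_map_real_mult
        continuous_map_sqrt continuous_map_real_pow continuous_map_real_min
        cm_fst_real cm_coord cm_ipr continuous_map_canonical_const)
      apply simp
     apply simp
    subgoal for z using pos[of z] by simp
    done
qed

lemma cm_cos: "continuous_map Z euclideanreal f \<Longrightarrow> continuous_map Z euclideanreal (\<lambda>z. cos (f z))"
  using continuous_map_compose[of Z euclideanreal f euclideanreal cos]
  by (simp add: o_def continuous_on_cos continuous_on_id)

lemma cm_sin: "continuous_map Z euclideanreal f \<Longrightarrow> continuous_map Z euclideanreal (\<lambda>z. sin (f z))"
  using continuous_map_compose[of Z euclideanreal f euclideanreal sin]
  by (simp add: o_def continuous_on_sin continuous_on_id)

lemma exists_perp:
  assumes x0: "x0 \<in> topspace (nsphere d)" and d: "1 \<le> d"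
  obtains w where "w \<in> topspace (nsphere d)" "ipr d w x0 = 0"
proof -
  have x0x0: "ipr d x0 x0 = 1" and z: "\<forall>i>d. x0 i = 0" using x0 by (auto simp: topspace_nsphere_iff)
  obtain a where a: "a \<le> d" "x0 a \<noteq> 0"
  proof (rule ccontr)
    assume "\<not> thesis"
    then have "\<forall>a\<le>d. x0 a = 0" using that by blast
    then have "ipr d x0 x0 = 0" by (simp add: ipr_def)
    with x0x0 show False by simp
  qed
  define b where "b = (if a = 0 then 1 else 0::nat)"
  have b: "b \<le> d" "b \<noteq> a" using d by (auto simp: b_def)
  define r where "r = sqrt ((x0 a)^2 + (x0 b)^2)"
  have r2: "r^2 = (x0 a)^2 + (x0 b)^2" by (simp add: r_def)
  have rpos: "r > 0" using a(2) by (simp add: r_def add_pos_nonneg)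
  define w where "w = (\<lambda>i. if i = a then x0 b / r else if i = b then - x0 a / r else 0)"
  have ww: "ipr d w w = ((x0 b)^2 + (x0 a)^2) / r^2"
  proof -
    have "ipr d w w = (\<Sum>i\<le>d. (if i = a then (x0 b / r)^2 else 0) + (if i = b then (x0 a / r)^2 else 0))"
      unfolding ipr_def by (intro sum.cong) (auto simp: w_def power2_eq_square b)
    also have "\<dots> = (x0 b / r)^2 + (x0 a / r)^2"
      by (simp add: sum.distrib a b)
    finally show ?thesis by (simp add: power_divide add_divide_distrib)
  qed
  have "ipr d w w = 1" using ww r2 rpos a(2) by (simp add: add.commute)
  moreover have "ipr d w x0 = 0"
  proof -
    have "ipr d w x0 = (\<Sum>i\<le>d. (if i = a then x0 b / r * x0 a else 0) + (if i = b then - x0 a / r * x0 b else 0))"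
      unfolding ipr_def by (intro sum.cong) (auto simp: w_def b)
    also have "\<dots> = 0" by (simp add: sum.distrib a b)
    finally show ?thesis .
  qed
  moreover have "\<forall>i>d. w i = 0" using a b by (auto simp: w_def)
  ultimately show ?thesis using that[of w] by (simp add: topspace_nsphere_iff)
qed

definition rot :: "nat \<Rightarrow> (nat \<Rightarrow> real) \<Rightarrow> (nat \<Rightarrow> real) \<Rightarrow> real \<Rightarrow> (nat \<Rightarrow> real) \<Rightarrow> (nat \<Rightarrow> real)" where
  "rot d x0 w \<theta> y = (let p = ipr d y x0; q = ipr d y w in
     (\<lambda>i. 1 * y i + ((cos \<theta> - 1) * p - sin \<theta> * q) * x0 i + ((cos \<theta> - 1) * q + sin \<theta> * p) * w i))"

lemma rot_in:
  assumes y: "y \<in> topspace (nsphere d)" and x0: "x0 \<in> topspace (nsphere d)"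
    and w: "w \<in> topspace (nsphere d)" and wx0: "ipr d w x0 = 0"
  shows "rot d x0 w \<theta> y \<in> topspace (nsphere d)"
proof -
  have yy: "ipr d y y = 1" and x0x0: "ipr d x0 x0 = 1" and ww: "ipr d w w = 1"
    and z: "\<forall>i>d. y i = 0" "\<forall>i>d. x0 i = 0" "\<forall>i>d. w i = 0"
    using y x0 w by (auto simp: topspace_nsphere_iff)
  define p where "p = ipr d y x0"
  define q where "q = ipr d y w"
  define A where "A = (cos \<theta> - 1) * p - sin \<theta> * q"
  define B where "B = (cos \<theta> - 1) * q + sin \<theta> * p"
  have eq: "rot d x0 w \<theta> y = (\<lambda>i. 1 * y i + A * x0 i + B * w i)"
    by (simp add: rot_def Let_def A_def B_def p_def q_def)
  have "ipr d (rot d x0 w \<theta> y) (rot d x0 w \<theta> y) = (\<Sum>i\<le>d. (1 * y i + A * x0 i + B * w i)^2)"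
    unfolding eq ipr_def power2_eq_square ..
  also have "\<dots> = 1^2 * ipr d y y + A^2 * ipr d x0 x0 + B^2 * ipr d w w
     + 2*1*A * ipr d y x0 + 2*1*B * ipr d y w + 2*A*B * ipr d x0 w"
    by (rule sum_sq_expand3)
  also have "\<dots> = 1 + A^2 + B^2 + 2*A*p + 2*B*q"
    using wx0 by (simp add: yy x0x0 ww p_def q_def ipr_sym[of d x0 w])
  also have "\<dots> = 1"
    using sin_cos_squared_add[of \<theta>] unfolding A_def B_def by algebra
  finally show ?thesis using z by (simp add: topspace_nsphere_iff eq)
qed

lemma rot_0: "rot d x0 w 0 y = y"
  by (simp add: rot_def Let_def)

lemma rot_pi_neg:
  assumes x0: "x0 \<in> topspace (nsphere d)" and wx0: "ipr d w x0 = 0"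
  shows "rot d x0 w pi (\<lambda>i. - x0 i) = x0"
proof -
  have x0x0: "ipr d x0 x0 = 1" using x0 by (simp add: topspace_nsphere_iff)
  have "ipr d (\<lambda>i. - x0 i) x0 = -1" using x0x0 by (simp add: ipr_def sum_negf)
  moreover have "ipr d (\<lambda>i. - x0 i) w = 0" using wx0 by (simp add: ipr_def sum_negf ipr_sym[of d w x0] mult.commute)
  ultimately show ?thesis by (simp add: rot_def Let_def)
qed

lemma neg_in_nsphere: "x \<in> topspace (nsphere d) \<Longrightarrow> (\<lambda>i. - x i) \<in> topspace (nsphere d)"
  by (simp add: topspace_nsphere_iff ipr_def)

lemma sphere_homotopy:
  assumes x0: "x0 \<in> topspace (nsphere d)" and d: "1 \<le> d"
  obtains \<alpha> \<beta> :: "real \<Rightarrow> (nat \<Rightarrow> real) \<Rightarrow> (nat \<Rightarrow> real)" where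
    "continuous_map (prod_topology (top_of_set {0..1}) (nsphere d)) (nsphere d) (\<lambda>z. \<alpha> (fst z) (snd z))"
    "continuous_map (prod_topology (top_of_set {0..1}) (nsphere d)) (nsphere d) (\<lambda>z. \<beta> (fst z) (snd z))"
    "\<And>x. x \<in> topspace (nsphere d) \<Longrightarrow> \<alpha> 0 x = x"
    "\<And>x. x \<in> topspace (nsphere d) \<Longrightarrow> \<beta> 0 x = x"
    "\<And>t. t \<in> {0..1} \<Longrightarrow> \<alpha> t x0 = x0"
    "\<And>x. x \<in> topspace (nsphere d) \<Longrightarrow> \<alpha> 1 x = x0 \<or> \<beta> 1 x = x0"
proof -
  obtain w where w: "w \<in> topspace (nsphere d)" "ipr d w x0 = 0" using exists_perp[OF x0 d] by blast
  define \<beta> where "\<beta> t x = rot d x0 w (t*pi) (\<lambda>i. - alph d x0 t (\<lambda>j. - x j) i)" for t x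
  let ?Z = "prod_topology (top_of_set {0..1::real}) (nsphere d)"
  have cA: "continuous_map ?Z (nsphere d) (\<lambda>z. alph d x0 (fst z) (snd z))" by (rule alph_cont[OF x0])
  have cN: "continuous_map ?Z ?Z (\<lambda>z. (fst z, \<lambda>j. - snd z j))"
  proof (rule continuous_map_pairedI)
    show "continuous_map ?Z (top_of_set {0..1}) fst" by (rule continuous_map_fst)
    show "continuous_map ?Z (nsphere d) (\<lambda>z. \<lambda>j. - snd z j)"
      by (rule cm_into_nsphere) (auto intro!: continuous_map_minus cm_coord simp: neg_in_nsphere topspace_I_sphere)
  qed
  have cG: "continuous_map ?Z (nsphere d) (\<lambda>z. alph d x0 (fst z) (\<lambda>j. - snd z j))"
    using continuous_map_compose[OF cN cA] by (simp add: o_def)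
  have cGi: "continuous_map ?Z euclideanreal (\<lambda>z. alph d x0 (fst z) (\<lambda>j. - snd z j) i)" for i
    using continuous_map_compose[OF cG continuous_map_nsphere_projection] by (simp add: o_def)
  have Gin: "(\<lambda>i. - alph d x0 (fst z) (\<lambda>j. - snd z j) i) \<in> topspace (nsphere d)" if "z \<in> topspace ?Z" for z
    using that alph_in[OF neg_in_nsphere x0] neg_in_nsphere by (auto simp: topspace_I_sphere)
  have cB: "continuous_map ?Z (nsphere d) (\<lambda>z. \<beta> (fst z) (snd z))"
  proof (rule cm_into_nsphere)
    fix z assume "z \<in> topspace ?Z"
    then show "\<beta> (fst z) (snd z) \<in> topspace (nsphere d)"
      unfolding \<beta>_def using rot_in[OF Gin x0 w] by blast
  next
    fix i
    show "continuous_map ?Z euclideanreal (\<lambda>z. \<beta> (fst z) (snd z) i)"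
      unfolding \<beta>_def rot_def Let_def ipr_def
      by (intro continuous_map_add continuous_map_diff continuous_map_real_mult continuous_map_minus
          continuous_map_sum cm_cos cm_sin cGi cm_fst_real continuous_map_canonical_const) auto
  qed
  show ?thesis
  proof (rule that[of "alph d x0" \<beta>])
    show "continuous_map ?Z (nsphere d) (\<lambda>z. alph d x0 (fst z) (snd z))" by (rule cA)
    show "continuous_map ?Z (nsphere d) (\<lambda>z. \<beta> (fst z) (snd z))" by (rule cB)
    show "alph d x0 0 x = x" if "x \<in> topspace (nsphere d)" for x using alph_0[OF that] .
    show "\<beta> 0 x = x" if "x \<in> topspace (nsphere d)" for x
      using alph_0[OF neg_in_nsphere[OF that]] by (simp add: \<beta>_def rot_0)
    show "alph d x0 t x0 = x0" if "t \<in> {0..1}" for t using alph_base[OF x0] that by auto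
    show "alph d x0 1 x = x0 \<or> \<beta> 1 x = x0" if x: "x \<in> topspace (nsphere d)" for x
    proof (cases "0 \<le> ipr d x x0")
      case True then show ?thesis using alph_1[OF x0] by blast
    next
      case False
      then have "0 \<le> ipr d (\<lambda>j. - x j) x0" by (simp add: ipr_def sum_negf)
      then have "alph d x0 1 (\<lambda>j. - x j) = x0" using alph_1[OF x0] by blast
      then have "\<beta> 1 x = rot d x0 w pi (\<lambda>i. - x0 i)" by (simp add: \<beta>_def)
      then show ?thesis using rot_pi_neg[OF x0 w(2)] by simp
    qed
  qed
qed



lemma istopology_quotient:
  "istopology (\<lambda>U. U \<subseteq> q ` topspace T \<and> openin T {x \<in> topspace T. q x \<in> U})"
proof -
  have 1: "S \<inter> U \<subseteq> q ` topspace T \<and> openin T {x \<in> topspace T. q x \<in> S \<inter> U}"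
    if S: "S \<subseteq> q ` topspace T \<and> openin T {x \<in> topspace T. q x \<in> S}"
    and U: "U \<subseteq> q ` topspace T \<and> openin T {x \<in> topspace T. q x \<in> U}" for S U
  proof -
    have "{x \<in> topspace T. q x \<in> S \<inter> U} = {x \<in> topspace T. q x \<in> S} \<inter> {x \<in> topspace T. q x \<in> U}" by auto
    then show ?thesis using S U by auto
  qed
  have 2: "\<Union>K \<subseteq> q ` topspace T \<and> openin T {x \<in> topspace T. q x \<in> \<Union>K}"
    if K: "\<forall>U\<in>K. U \<subseteq> q ` topspace T \<and> openin T {x \<in> topspace T. q x \<in> U}" for K
  proof -
    have "{x \<in> topspace T. q x \<in> \<Union>K} = (\<Union>U\<in>K. {x \<in> topspace T. q x \<in> U})" by auto
    then show ?thesis using K by auto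
  qed
  show ?thesis unfolding istopology_def using 1 2 by blast
qed

lemma openin_qt:
  "openin (quotient_topology T q) U \<longleftrightarrow> U \<subseteq> q ` topspace T \<and> openin T {x \<in> topspace T. q x \<in> U}"
  unfolding quotient_topology_def by (simp add: istopology_quotient)

lemma topspace_qt: "topspace (quotient_topology T q) = q ` topspace T"
proof -
  have "openin (quotient_topology T q) (q ` topspace T)"
  proof -
    have "{x \<in> topspace T. q x \<in> q ` topspace T} = topspace T" by auto
    then show ?thesis by (simp add: openin_qt)
  qed
  then have "q ` topspace T \<subseteq> topspace (quotient_topology T q)" by (rule openin_subset)
  moreover have "topspace (quotient_topology T q) \<subseteq> q ` topspace T"
    using openin_qt[THEN iffD1, OF openin_topspace] by (rule conjunct1)
  ultimately show ?thesis by blast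
qed

lemma quotient_map_qt: "quotient_map T (quotient_topology T q) q"
  unfolding quotient_map_def
proof (intro conjI allI impI)
  show "q ` topspace T = topspace (quotient_topology T q)" by (simp add: topspace_qt)
  fix U assume "U \<subseteq> topspace (quotient_topology T q)"
  then have "U \<subseteq> q ` topspace T" by (simp add: topspace_qt)
  then show "openin T {x \<in> topspace T. q x \<in> U} = openin (quotient_topology T q) U"
    by (simp add: openin_qt)
qed

lemma cont_from_sum:
  assumes "\<And>i. i \<in> I \<Longrightarrow> continuous_map (X i) Y (\<lambda>x. f (i, x))"
  shows "continuous_map (sum_topology X I) Y f"
  unfolding continuous_map_def
proof (intro conjI allI impI)
  show "f \<in> topspace (sum_topology X I) \<rightarrow> topspace Y"
  proof
    fix z assume "z \<in> topspace (sum_topology X I)"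
    then obtain i y where "z = (i, y)" "i \<in> I" "y \<in> topspace (X i)" by auto
    then show "f z \<in> topspace Y" using continuous_map_funspace[OF assms] by blast
  qed
  fix U assume U: "openin Y U"
  show "openin (sum_topology X I) {x \<in> topspace (sum_topology X I). f x \<in> U}"
    unfolding openin_sum_topology
  proof (intro conjI ballI)
    show "{x \<in> topspace (sum_topology X I). f x \<in> U} \<subseteq> Sigma I (topspace \<circ> X)" by auto
    fix i assume i: "i \<in> I"
    have "{x. (i, x) \<in> {x \<in> topspace (sum_topology X I). f x \<in> U}} = {x \<in> topspace (X i). f (i, x) \<in> U}"
      using i by auto
    then show "openin (X i) {x. (i, x) \<in> {x \<in> topspace (sum_topology X I). f x \<in> U}}"
      using assms[OF i] U by (simp add: continuous_map_def)
  qed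
qed

lemma cont_prod_sum:
  assumes "\<And>k. k \<in> K \<Longrightarrow> continuous_map (prod_topology Z (Y k)) T (\<lambda>z. g (fst z, (k, snd z)))"
  shows "continuous_map (prod_topology Z (sum_topology Y K)) T g"
  unfolding continuous_map_def
proof (intro conjI allI impI)
  show "g \<in> topspace (prod_topology Z (sum_topology Y K)) \<rightarrow> topspace T"
  proof
    fix x assume x: "x \<in> topspace (prod_topology Z (sum_topology Y K))"
    obtain z k y where xe: "x = (z, (k, y))" by (cases x) auto
    have "(z, y) \<in> topspace (prod_topology Z (Y k))" "k \<in> K" using x xe by auto
    then have "g (fst (z, y), (k, snd (z, y))) \<in> topspace T" using continuous_map_funspace[OF assms[of k]] by blast
    then show "g x \<in> topspace T" using xe by simp
  qed
  fix U assume U: "openin T U"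
  show "openin (prod_topology Z (sum_topology Y K)) {x \<in> topspace (prod_topology Z (sum_topology Y K)). g x \<in> U}"
    unfolding openin_prod_topology_alt
  proof (intro allI impI)
    fix z w assume zw: "(z, w) \<in> {x \<in> topspace (prod_topology Z (sum_topology Y K)). g x \<in> U}"
    obtain k y where w: "w = (k, y)" by (cases w)
    have k: "k \<in> K" and zy: "(z, y) \<in> topspace (prod_topology Z (Y k))" and gU: "g (z, (k, y)) \<in> U"
      using zw w by auto
    have op: "openin (prod_topology Z (Y k)) {x \<in> topspace (prod_topology Z (Y k)). g (fst x, (k, snd x)) \<in> U}"
      using assms[OF k] U by (simp add: continuous_map_def)
    have zyS: "(z, y) \<in> {x \<in> topspace (prod_topology Z (Y k)). g (fst x, (k, snd x)) \<in> U}"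
      using zy gU by simp
    obtain A B where AB: "openin Z A" "openin (Y k) B" "z \<in> A" "y \<in> B"
      "A \<times> B \<subseteq> {x \<in> topspace (prod_topology Z (Y k)). g (fst x, (k, snd x)) \<in> U}"
      using op[unfolded openin_prod_topology_alt, rule_format, OF zyS] by blast
    have "openin (sum_topology Y K) ((\<lambda>x. (k, x)) ` B)"
      using open_map_component_injection[of k K Y, OF k] AB(2) unfolding open_map_def by blast
    moreover have "A \<times> ((\<lambda>x. (k, x)) ` B) \<subseteq> {x \<in> topspace (prod_topology Z (sum_topology Y K)). g x \<in> U}"
    proof
      fix p assume "p \<in> A \<times> ((\<lambda>x. (k, x)) ` B)"
      then obtain a b where p: "p = (a, (k, b))" "a \<in> A" "b \<in> B" by blast
      then have "(a, b) \<in> A \<times> B" by simp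
      then have "(a, b) \<in> {x \<in> topspace (prod_topology Z (Y k)). g (fst x, (k, snd x)) \<in> U}" using AB(5) by blast
      then show "p \<in> {x \<in> topspace (prod_topology Z (sum_topology Y K)). g x \<in> U}" using p k by simp
    qed
    ultimately show "\<exists>U' V. openin Z U' \<and> openin (sum_topology Y K) V \<and> z \<in> U' \<and> w \<in> V \<and>
        U' \<times> V \<subseteq> {x \<in> topspace (prod_topology Z (sum_topology Y K)). g x \<in> U}"
      using AB w by blast
  qed
qed

lemma openin_finite_all:
  assumes "finite F" "\<And>i. i \<in> F \<Longrightarrow> openin Z {x \<in> topspace Z. Q i x}"
  shows "openin Z {x \<in> topspace Z. \<forall>i\<in>F. Q i x}"
  using assms
proof (induction F rule: finite_induct)
  case empty
  then show ?case by simp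
next
  case (insert a F)
  have "{x \<in> topspace Z. \<forall>i\<in>insert a F. Q i x} = {x \<in> topspace Z. Q a x} \<inter> {x \<in> topspace Z. \<forall>i\<in>F. Q i x}"
    by auto
  then show ?case using insert by (auto intro: openin_Int)
qed



definition relab :: "('x \<Rightarrow> 'x) \<Rightarrow> ('m \<times> 'x) set \<Rightarrow> ('m \<times> 'x) set \<Rightarrow> ('m \<times> 'x) set" where
  "relab F S C = (\<lambda>p. (fst p, if p \<in> C then F (snd p) else snd p)) ` S"

definition kterm :: "('x \<Rightarrow> 'x) \<Rightarrow> ('x \<Rightarrow> 'x) \<Rightarrow> 'x \<Rightarrow> ('m \<times> 'x) set \<times> ('m \<times> 'x) set
    \<Rightarrow> (('m \<times> 'x) set \<times> ('m \<times> 'x) set) option" where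
  "kterm a b x0 c = (if (\<forall>p\<in>fst c \<inter> snd c. a (snd p) \<noteq> x0 \<and> b (snd p) \<noteq> x0)
      then Some (relab a (fst c) (snd c), relab b (snd c) (fst c)) else None)"

definition covers :: "'a set \<Rightarrow> ('a set \<times> 'a set) set" where
  "covers \<xi> = {(A, B). A \<union> B = \<xi> \<and> A \<noteq> {} \<and> B \<noteq> {}}"

definition Hk :: "('x \<Rightarrow> 'x) \<Rightarrow> ('x \<Rightarrow> 'x) \<Rightarrow> 'x \<Rightarrow> ('m \<times> 'x) set option
    \<Rightarrow> (('m \<times> 'x) set \<times> ('m \<times> 'x) set) option multiset" where
  "Hk a b x0 v = (case v of None \<Rightarrow> {#}
     | Some \<xi> \<Rightarrow> filter_mset (\<lambda>z. z \<noteq> None) (image_mset (kterm a b x0) (mset_set (covers \<xi>))))"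

definition sel :: "('x \<Rightarrow> 'x) \<Rightarrow> 'x \<Rightarrow> (nat \<Rightarrow> 'm \<times> 'x) \<Rightarrow> nat set \<Rightarrow> nat set \<Rightarrow> nat \<Rightarrow> 'm \<times> 'x" where
  "sel F x0 f I J i = (if i \<in> I then (fst (f i), if i \<in> J then F (snd (f i)) else snd (f i)) else (fst (f i), x0))"

definition dlt :: "nat \<Rightarrow> 'a set \<Rightarrow> 'a set option" where
  "dlt k \<xi> = (if card \<xi> = k then Some \<xi> else None)"

definition tterm :: "('x \<Rightarrow> 'x) \<Rightarrow> ('x \<Rightarrow> 'x) \<Rightarrow> 'x \<Rightarrow> nat \<Rightarrow> (nat \<Rightarrow> 'm \<times> 'x) \<Rightarrow> nat set \<times> nat set
    \<Rightarrow> (('m \<times> 'x) set \<times> ('m \<times> 'x) set) option" where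
  "tterm a b x0 j f c = smash_map (dlt (card (fst c)) (conf_of x0 (j, restrict (sel a x0 f (fst c) (snd c)) {..<j})),
                                  dlt (card (snd c)) (conf_of x0 (j, restrict (sel b x0 f (snd c) (fst c)) {..<j})))"

definition Lset :: "nat \<Rightarrow> nat \<Rightarrow> (nat set \<times> nat set) set" where
  "Lset j k = {(I, J). I \<subseteq> {..<j} \<and> J \<subseteq> {..<j} \<and> I \<noteq> {} \<and> J \<noteq> {} \<and> card (I \<union> J) = k}"

lemma finite_Lset: "finite (Lset j k)"
proof -
  have "Lset j k \<subseteq> Pow {..<j} \<times> Pow {..<j}" by (auto simp: Lset_def)
  then show ?thesis by (rule finite_subset) auto
qed

lemma conf_of_eq: "conf_of x0 (j, g) = g ` {i. i < j \<and> snd (g i) \<noteq> x0}"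
  by (auto simp: conf_of_def)

lemma conf_of_restrict: "conf_of x0 (j, restrict g {..<j}) = conf_of x0 (j, g)"
  by (auto simp: conf_of_def)

lemma smash_map_Some: "smash_map (Some a, Some b) = Some (a, b)"
  by (simp add: smash_map_def)

lemma smash_map_None: "smash_map (u, v) \<noteq> None \<longleftrightarrow> u \<noteq> None \<and> v \<noteq> None"
  by (auto simp: smash_map_def split: option.splits)

lemma conf_sel:
  assumes "I \<subseteq> {..<j}"
  shows "conf_of x0 (j, sel F x0 f I J) =
     (\<lambda>i. (fst (f i), if i \<in> J then F (snd (f i)) else snd (f i))) `
       {i \<in> I. (if i \<in> J then F (snd (f i)) else snd (f i)) \<noteq> x0}"
  using assms unfolding conf_of_eq sel_def by (auto simp: image_iff)

lemma card_conf_sel: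
  assumes I: "I \<subseteq> {..<j}" and inj: "inj_on (fst \<circ> f) {..<j}"
  shows "card (conf_of x0 (j, sel F x0 f I J)) = card {i \<in> I. (if i \<in> J then F (snd (f i)) else snd (f i)) \<noteq> x0}"
proof -
  have "inj_on (\<lambda>i. (fst (f i), if i \<in> J then F (snd (f i)) else snd (f i))) I"
    using inj_on_subset[OF inj I] by (auto simp: inj_on_def)
  then show ?thesis unfolding conf_sel[OF I] by (intro card_image) (auto intro: inj_on_subset)
qed

lemma card_eq_all:
  assumes "finite I"
  shows "card {i \<in> I. P i} = card I \<longleftrightarrow> (\<forall>i\<in>I. P i)"
proof
  assume "card {i \<in> I. P i} = card I"
  then have "{i \<in> I. P i} = I" using assms by (intro card_subset_eq) auto
  then show "\<forall>i\<in>I. P i" by blast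
next
  assume "\<forall>i\<in>I. P i"
  then have "{i \<in> I. P i} = I" by blast
  then show "card {i \<in> I. P i} = card I" by simp
qed

lemma filter_image_mset_set:
  assumes "finite S"
  shows "filter_mset P (image_mset g (mset_set S)) = image_mset g (mset_set {c \<in> S. P (g c)})"
  using assms by (simp add: filter_mset_image_mset)

lemma comb_main:
  assumes inj: "inj_on (fst \<circ> f) {..<j}" and ck: "card (conf_of x0 (j, f)) \<le> k" and ax0: "a x0 = x0"
  shows "Hk a b x0 (dlt k (conf_of x0 (j, f))) =
           filter_mset (\<lambda>z. z \<noteq> None) (image_mset (tterm a b x0 j f) (mset_set (Lset j k)))"
proof -
  define N where "N = {i. i < j \<and> snd (f i) \<noteq> x0}"
  define \<xi> where "\<xi> = conf_of x0 (j, f)"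
  have injf: "inj_on f {..<j}" using inj by (auto simp: inj_on_def)
  have Nsub: "N \<subseteq> {..<j}" by (auto simp: N_def)
  have finN: "finite N" using Nsub finite_subset by blast
  have xiN: "\<xi> = f ` N" by (simp add: \<xi>_def N_def conf_of_eq)
  have cardxi: "card \<xi> = card N" unfolding xiN by (rule card_image[OF inj_on_subset[OF injf Nsub]])
  define la where "la I J i = (if i \<in> J then a (snd (f i)) else snd (f i))" for I J :: "nat set" and i
  define lb where "lb I J i = (if i \<in> I then b (snd (f i)) else snd (f i))" for I J :: "nat set" and i
  define good where "good I J \<longleftrightarrow> (\<forall>i\<in>I. la I J i \<noteq> x0) \<and> (\<forall>i\<in>J. lb I J i \<noteq> x0)" for I J
  have tt: "tterm a b x0 j f (I, J) = (if good I J then Some ((\<lambda>i. (fst (f i), la I J i)) ` I, (\<lambda>i. (fst (f i), lb I J i)) ` J) else None)"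
    if "(I, J) \<in> Lset j k" for I J
  proof -
    have I: "I \<subseteq> {..<j}" and J: "J \<subseteq> {..<j}" using that by (auto simp: Lset_def)
    have fI: "finite I" "finite J" using I J finite_subset by blast+
    have c1: "card (conf_of x0 (j, sel a x0 f I J)) = card I \<longleftrightarrow> (\<forall>i\<in>I. la I J i \<noteq> x0)"
      unfolding card_conf_sel[OF I inj] la_def by (rule card_eq_all[OF fI(1)])
    have c2: "card (conf_of x0 (j, sel b x0 f J I)) = card J \<longleftrightarrow> (\<forall>i\<in>J. lb I J i \<noteq> x0)"
      unfolding card_conf_sel[OF J inj] lb_def by (rule card_eq_all[OF fI(2)])
    have e1: "conf_of x0 (j, sel a x0 f I J) = (\<lambda>i. (fst (f i), la I J i)) ` I" if h: "\<forall>i\<in>I. la I J i \<noteq> x0"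
    proof -
      have "{i \<in> I. (if i \<in> J then a (snd (f i)) else snd (f i)) \<noteq> x0} = I" using h unfolding la_def by auto
      then show ?thesis by (simp add: conf_sel[OF I] la_def)
    qed
    have e2: "conf_of x0 (j, sel b x0 f J I) = (\<lambda>i. (fst (f i), lb I J i)) ` J" if h: "\<forall>i\<in>J. lb I J i \<noteq> x0"
    proof -
      have "{i \<in> J. (if i \<in> I then b (snd (f i)) else snd (f i)) \<noteq> x0} = J" using h unfolding lb_def by auto
      then show ?thesis by (simp add: conf_sel[OF J] lb_def)
    qed
    show ?thesis
      unfolding tterm_def fst_conv snd_conv conf_of_restrict dlt_def good_def
      using c1 c2 e1 e2 by (auto simp: smash_map_def)
  qed
  have goodN: "I \<union> J \<subseteq> N" if "(I, J) \<in> Lset j k" "good I J" for I J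
  proof
    fix i assume i: "i \<in> I \<union> J"
    have "i < j" using i that(1) by (auto simp: Lset_def)
    moreover have "snd (f i) \<noteq> x0"
    proof
      assume h: "snd (f i) = x0"
      show False
      proof (cases "i \<in> I")
        case True
        then show False using that(2) h ax0 by (auto simp: good_def la_def split: if_splits)
      next
        case False
        then have "i \<in> J" using i by blast
        then show False using that(2) h False by (auto simp: good_def lb_def)
      qed
    qed
    ultimately show "i \<in> N" by (simp add: N_def)
  qed
  have goodeq: "I \<union> J = N \<and> card \<xi> = k" if "(I, J) \<in> Lset j k" "good I J" for I J
  proof -
    have "card (I \<union> J) \<le> card N" using goodN[OF that] finN by (rule card_mono[rotated])
    moreover have "card (I \<union> J) = k" using that by (simp add: Lset_def)
    moreover have "card N \<le> k" using ck cardxi by (simp add: \<xi>_def)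
    ultimately have "card N = k" by linarith
    then show ?thesis using goodN[OF that] finN cardxi
      by (metis \<open>card (I \<union> J) = k\<close> card_subset_eq)
  qed
  define S1 where "S1 = {c \<in> Lset j k. tterm a b x0 j f c \<noteq> None}"
  have S1: "c \<in> S1 \<longleftrightarrow> c \<in> Lset j k \<and> good (fst c) (snd c)" for c
  proof (cases c)
    case (Pair I J)
    show ?thesis
    proof (cases "(I, J) \<in> Lset j k")
      case True
      then show ?thesis using tt[OF True] Pair by (simp add: S1_def)
    qed (simp add: S1_def Pair)
  qed
  have RHS: "filter_mset (\<lambda>z. z \<noteq> None) (image_mset (tterm a b x0 j f) (mset_set (Lset j k)))
      = image_mset (tterm a b x0 j f) (mset_set S1)"
    unfolding S1_def by (rule filter_image_mset_set[OF finite_Lset])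
  show ?thesis
  proof (cases "card \<xi> = k")
    case False
    then have "S1 = {}" using goodeq S1 by fastforce
    moreover have "dlt k (conf_of x0 (j, f)) = None" using False by (simp add: dlt_def \<xi>_def)
    ultimately show ?thesis using RHS by (simp add: Hk_def)
  next
    case True
    have finxi: "finite \<xi>" using xiN finN by simp
    have fincov: "finite (covers \<xi>)"
    proof -
      have "covers \<xi> \<subseteq> Pow \<xi> \<times> Pow \<xi>" by (auto simp: covers_def)
      moreover have "finite (Pow \<xi> \<times> Pow \<xi>)" using finxi by simp
      ultimately show ?thesis by (rule finite_subset)
    qed
    define S2 where "S2 = {c \<in> covers \<xi>. kterm a b x0 c \<noteq> None}"
    have LHS: "Hk a b x0 (dlt k (conf_of x0 (j, f))) = image_mset (kterm a b x0) (mset_set S2)"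
      using True unfolding Hk_def dlt_def \<xi>_def[symmetric] S2_def
      by (simp add: filter_image_mset_set[OF fincov])
    define \<phi> where "\<phi> c = (f ` fst c, f ` snd c)" for c :: "nat set \<times> nat set"
    have inS1: "I \<union> J = N \<and> good I J \<and> I \<noteq> {} \<and> J \<noteq> {}" if "(I, J) \<in> S1" for I J
    proof -
      have L: "(I, J) \<in> Lset j k" and g: "good I J" using that S1[of "(I,J)"] by auto
      show ?thesis using goodeq[OF L g] g L unfolding Lset_def by blast
    qed
    have fimg_int: "f ` I \<inter> f ` J = f ` (I \<inter> J)" if "I \<subseteq> N" "J \<subseteq> N" for I J
      using inj_on_image_Int[OF inj_on_subset[OF injf Nsub] that] by simp
    have fmem: "f i \<in> f ` J \<longleftrightarrow> i \<in> J" if "i \<in> N" "J \<subseteq> N" for i J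
      using inj_on_subset[OF injf Nsub] that by (auto simp: inj_on_def)
    have agree: "tterm a b x0 j f c = kterm a b x0 (\<phi> c)" if c: "c \<in> S1" for c
    proof -
      obtain I J where cIJ: "c = (I, J)" by (cases c)
      have h: "I \<union> J = N" "good I J" using inS1[of I J] c cIJ by auto
      have IN: "I \<subseteq> N" "J \<subseteq> N" using h by auto
      have cond: "\<forall>p\<in>f ` I \<inter> f ` J. a (snd p) \<noteq> x0 \<and> b (snd p) \<noteq> x0"
        using h(2) unfolding fimg_int[OF IN] by (auto simp: good_def la_def lb_def)
      have r1: "relab a (f ` I) (f ` J) = (\<lambda>i. (fst (f i), la I J i)) ` I"
        unfolding relab_def image_image la_def using fmem IN by (intro image_cong) auto
      have r2: "relab b (f ` J) (f ` I) = (\<lambda>i. (fst (f i), lb I J i)) ` J"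
        unfolding relab_def image_image lb_def using fmem IN by (intro image_cong) auto
      show ?thesis using c cIJ h
        by (simp add: tt[of I J] S1 \<phi>_def kterm_def cond r1 r2)
    qed
    have injphi: "inj_on \<phi> S1"
    proof (rule inj_onI)
      fix c d assume c: "c \<in> S1" and d: "d \<in> S1" and e: "\<phi> c = \<phi> d"
      obtain I J where cIJ: "c = (I, J)" by (cases c)
      obtain I' J' where dIJ: "d = (I', J')" by (cases d)
      have "I \<union> J = N" "I' \<union> J' = N" using inS1[of I J] inS1[of I' J'] c d cIJ dIJ by auto
      then have "I \<subseteq> N" "J \<subseteq> N" "I' \<subseteq> N" "J' \<subseteq> N" by auto
      moreover have "f ` I = f ` I'" "f ` J = f ` J'" using e cIJ dIJ by (auto simp: \<phi>_def)
      ultimately have "I = I'" "J = J'"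
        using inj_on_image_eq_iff[OF inj_on_subset[OF injf Nsub]] by blast+
      then show "c = d" using cIJ dIJ by simp
    qed
    have imgphi: "\<phi> ` S1 = S2"
    proof
      show "\<phi> ` S1 \<subseteq> S2"
      proof
        fix z assume "z \<in> \<phi> ` S1"
        then obtain c where c: "c \<in> S1" and z: "z = \<phi> c" by blast
        obtain I J where cIJ: "c = (I, J)" by (cases c)
        have h: "I \<union> J = N" "I \<noteq> {}" "J \<noteq> {}" using inS1[of I J] c cIJ by auto
        have "\<phi> c \<in> covers \<xi>" using h cIJ xiN by (auto simp: \<phi>_def covers_def)
        moreover have "kterm a b x0 (\<phi> c) \<noteq> None"
          using agree[OF c] c by (simp add: S1_def)
        ultimately show "z \<in> S2" using z by (simp add: S2_def)
      qed
    next
      show "S2 \<subseteq> \<phi> ` S1"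
      proof
        fix z assume z: "z \<in> S2"
        obtain A B where zAB: "z = (A, B)" by (cases z)
        have cov: "A \<union> B = \<xi>" "A \<noteq> {}" "B \<noteq> {}" and kt: "kterm a b x0 (A, B) \<noteq> None"
          using z zAB by (auto simp: S2_def covers_def)
        define I where "I = {i \<in> N. f i \<in> A}"
        define J where "J = {i \<in> N. f i \<in> B}"
        have AB: "A \<subseteq> f ` N" "B \<subseteq> f ` N" using cov xiN by auto
        have fI: "f ` I = A" "f ` J = B" unfolding I_def J_def using AB by blast+
        have IJN: "I \<union> J = N" using cov xiN by (auto simp: I_def J_def)
        have ne: "I \<noteq> {}" "J \<noteq> {}" using fI cov by auto
        have IN: "I \<subseteq> N" "J \<subseteq> N" by (auto simp: I_def J_def)
        have kcond: "\<forall>p\<in>A \<inter> B. a (snd p) \<noteq> x0 \<and> b (snd p) \<noteq> x0"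
          using kt by (simp add: kterm_def split: if_splits)
        have gd: "good I J"
          unfolding good_def la_def lb_def
        proof (intro conjI ballI)
          fix i assume i: "i \<in> I"
          show "(if i \<in> J then a (snd (f i)) else snd (f i)) \<noteq> x0"
          proof (cases "i \<in> J")
            case True
            then have "f i \<in> A \<inter> B" using i by (auto simp: I_def J_def)
            then show ?thesis using kcond True by auto
          qed (use i in \<open>auto simp: I_def N_def\<close>)
        next
          fix i assume i: "i \<in> J"
          show "(if i \<in> I then b (snd (f i)) else snd (f i)) \<noteq> x0"
          proof (cases "i \<in> I")
            case True
            then have "f i \<in> A \<inter> B" using i by (auto simp: I_def J_def)
            then show ?thesis using kcond True by auto
          qed (use i in \<open>auto simp: J_def N_def\<close>)
        qed
        have "(I, J) \<in> Lset j k"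
          using IN Nsub ne IJN True cardxi by (auto simp: Lset_def)
        then have "(I, J) \<in> S1" using gd S1 by auto
        moreover have "\<phi> (I, J) = z" using fI zAB by (simp add: \<phi>_def)
        ultimately show "z \<in> \<phi> ` S1" by blast
      qed
    qed
    have "image_mset (tterm a b x0 j f) (mset_set S1) = image_mset (kterm a b x0 \<circ> \<phi>) (mset_set S1)"
    proof (rule image_mset_cong)
      fix c assume "c \<in># mset_set S1"
      then have "c \<in> S1" by (metis elem_mset_set empty_iff mset_set.infinite set_mset_empty)
      then show "tterm a b x0 j f c = (kterm a b x0 \<circ> \<phi>) c" using agree by simp
    qed
    also have "\<dots> = image_mset (kterm a b x0) (image_mset \<phi> (mset_set S1))"
      by (simp add: image_mset.compositionality)
    also have "\<dots> = image_mset (kterm a b x0) (mset_set S2)"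
      by (simp add: image_mset_mset_set[OF injphi] imgphi)
    finally show ?thesis using RHS LHS by simp
  qed
qed

lemma relab_id: "(\<forall>p\<in>S \<inter> C. F (snd p) = snd p) \<Longrightarrow> relab F S C = S"
proof -
  assume h: "\<forall>p\<in>S \<inter> C. F (snd p) = snd p"
  have "relab F S C = (\<lambda>p. p) ` S"
    unfolding relab_def using h by (intro image_cong) auto
  then show ?thesis by simp
qed

lemma finite_covers: "finite \<xi> \<Longrightarrow> finite (covers \<xi>)"
proof -
  assume fin: "finite \<xi>"
  have "covers \<xi> \<subseteq> Pow \<xi> \<times> Pow \<xi>" by (auto simp: covers_def)
  moreover have "finite (Pow \<xi> \<times> Pow \<xi>)" using fin by simp
  ultimately show ?thesis by (rule finite_subset)
qed

lemma Hk_0: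
  assumes fin: "finite \<xi>" and nb: "\<forall>p\<in>\<xi>. snd p \<noteq> x0"
    and ida: "\<forall>p\<in>\<xi>. a (snd p) = snd p" and idb: "\<forall>p\<in>\<xi>. b (snd p) = snd p"
  shows "Hk a b x0 (Some \<xi>) = Psi_map (Some \<xi>)"
proof -
  have kt: "kterm a b x0 c = Some c" if "c \<in> covers \<xi>" for c
  proof -
    obtain A B where c: "c = (A, B)" by (cases c)
    have sub: "A \<subseteq> \<xi>" "B \<subseteq> \<xi>" using that c by (auto simp: covers_def)
    have "\<forall>p\<in>A \<inter> B. a (snd p) \<noteq> x0 \<and> b (snd p) \<noteq> x0"
    proof
      fix p assume "p \<in> A \<inter> B"
      then have "p \<in> \<xi>" using sub by auto
      then show "a (snd p) \<noteq> x0 \<and> b (snd p) \<noteq> x0" using nb ida idb by auto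
    qed
    moreover have "relab a A B = A" "relab b B A = B" using sub ida idb by (auto intro!: relab_id)
    ultimately show ?thesis using c by (simp add: kterm_def)
  qed
  have "image_mset (kterm a b x0) (mset_set (covers \<xi>)) = image_mset Some (mset_set (covers \<xi>))"
    using kt by (intro image_mset_cong) (simp add: finite_covers[OF fin])
  also have "\<dots> = mset_set (Some ` covers \<xi>)" by (simp add: image_mset_mset_set)
  finally have e: "image_mset (kterm a b x0) (mset_set (covers \<xi>)) = mset_set (Some ` covers \<xi>)" .
  have "filter_mset (\<lambda>z. z \<noteq> None) (mset_set (Some ` covers \<xi>)) = mset_set (Some ` covers \<xi>)"
  proof -
    have "finite (Some ` covers \<xi>)" using finite_covers[OF fin] by simp
    then have "filter_mset (\<lambda>z. z \<noteq> None) (mset_set (Some ` covers \<xi>)) = mset_set {z \<in> Some ` covers \<xi>. z \<noteq> None}"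
      by (rule filter_mset_mset_set)
    also have "{z \<in> Some ` covers \<xi>. z \<noteq> None} = Some ` covers \<xi>" by auto
    finally show ?thesis .
  qed
  moreover have "Psi_map (Some \<xi>) = mset_set (Some ` covers \<xi>)" by (simp add: Psi_map_def covers_def)
  ultimately show ?thesis unfolding Hk_def option.case e by simp
qed

lemma Hk_1:
  assumes fin: "finite \<xi>" and kill: "\<forall>p\<in>\<xi>. a (snd p) = x0 \<or> b (snd p) = x0"
  shows "Hk a b x0 (Some \<xi>) = Phi_map (Some \<xi>)"
proof -
  define D where "D = {(A, B). A \<union> B = \<xi> \<and> A \<inter> B = {} \<and> A \<noteq> {} \<and> B \<noteq> {}}"
  have S2: "{c \<in> covers \<xi>. kterm a b x0 c \<noteq> None} = D"
  proof (intro set_eqI iffI)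
    fix c assume "c \<in> {c \<in> covers \<xi>. kterm a b x0 c \<noteq> None}"
    then obtain A B where c: "c = (A, B)" "(A, B) \<in> covers \<xi>" "kterm a b x0 (A, B) \<noteq> None" by (cases c) auto
    have "A \<inter> B = {}"
    proof (rule ccontr)
      assume "A \<inter> B \<noteq> {}"
      then obtain p where p: "p \<in> A \<inter> B" by blast
      then have "p \<in> \<xi>" using c(2) by (auto simp: covers_def)
      then have "a (snd p) = x0 \<or> b (snd p) = x0" using kill by blast
      then show False using c(3) p by (auto simp: kterm_def split: if_splits)
    qed
    then show "c \<in> D" using c by (auto simp: covers_def D_def)
  next
    fix c assume "c \<in> D"
    then obtain A B where c: "c = (A, B)" "A \<union> B = \<xi>" "A \<inter> B = {}" "A \<noteq> {}" "B \<noteq> {}" by (auto simp: D_def)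
    then show "c \<in> {c \<in> covers \<xi>. kterm a b x0 c \<noteq> None}"
      by (auto simp: covers_def kterm_def)
  qed
  have kt: "kterm a b x0 c = Some c" if "c \<in> D" for c
  proof -
    obtain A B where c: "c = (A, B)" by (cases c)
    have "A \<inter> B = {}" using that c by (auto simp: D_def)
    then have "relab a A B = A" "relab b B A = B" by (auto intro!: relab_id)
    then show ?thesis using c \<open>A \<inter> B = {}\<close> by (simp add: kterm_def)
  qed
  have finD: "finite D" using finite_covers[OF fin] S2 by (metis (no_types, lifting) finite_subset mem_Collect_eq subsetI)
  have "Hk a b x0 (Some \<xi>) = image_mset (kterm a b x0) (mset_set D)"
    unfolding Hk_def using finite_covers[OF fin] S2 by (simp add: filter_image_mset_set)
  also have "\<dots> = image_mset Some (mset_set D)"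
    using kt finD by (intro image_mset_cong) simp
  also have "\<dots> = mset_set (Some ` D)" by (simp add: image_mset_mset_set)
  finally show ?thesis by (simp add: Phi_map_def D_def)
qed



lemma topspace_LT:
  "z \<in> topspace (labelled_tuples M X) \<longleftrightarrow>
     fst z \<in> UNIV \<and> snd z \<in> (\<Pi>\<^sub>E i\<in>{..<fst z}. topspace M \<times> topspace X) \<and> inj_on (fst \<circ> snd z) {..<fst z}"
  by (cases z) (auto simp: labelled_tuples_def)

lemma card_conf_of:
  assumes "inj_on (fst \<circ> f) {..<j}"
  shows "card (conf_of x0 (j, f)) = card {i. i < j \<and> snd (f i) \<noteq> x0}"
proof -
  have "inj_on f {i. i < j \<and> snd (f i) \<noteq> x0}"
    using assms by (auto simp: inj_on_def)
  then show ?thesis unfolding conf_of_eq by (rule card_image)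
qed

lemma cm_proj_snd:
  assumes "i \<in> I"
  shows "continuous_map (product_topology (\<lambda>i. prod_topology M X) I) X (\<lambda>g. snd (g i))"
  using continuous_map_compose[OF continuous_map_product_projection[OF assms] continuous_map_snd]
  by (simp add: o_def)

lemma open_card_gt:
  assumes op: "openin X (topspace X - {x0})"
  shows "openin (labelled_tuples M X) {z \<in> topspace (labelled_tuples M X). k < card (conf_of x0 z)}"
    (is "openin ?LT ?S")
proof (subst openin_subopen, intro ballI)
  fix z assume z: "z \<in> ?S"
  obtain j f where zjf: "z = (j, f)" by (cases z)
  have fP: "f \<in> (\<Pi>\<^sub>E i\<in>{..<j}. topspace M \<times> topspace X)" and inj: "inj_on (fst \<circ> f) {..<j}"
    and kc: "k < card (conf_of x0 (j, f))"
    using z zjf by (auto simp: topspace_LT)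
  define Nf where "Nf = {i. i < j \<and> snd (f i) \<noteq> x0}"
  let ?P = "product_topology (\<lambda>i. prod_topology M X) {..<j}"
  define Og where "Og = {g \<in> topspace ?P. \<forall>i\<in>Nf. snd (g i) \<in> topspace X - {x0}}"
  have finNf: "finite Nf" by (simp add: Nf_def)
  have opO: "openin ?P Og"
    unfolding Og_def
  proof (rule openin_finite_all[OF finNf])
    fix i assume "i \<in> Nf"
    then have "i \<in> {..<j}" by (simp add: Nf_def)
    then show "openin ?P {g \<in> topspace ?P. snd (g i) \<in> topspace X - {x0}}"
      by (rule openin_continuous_map_preimage[OF cm_proj_snd[of i "{..<j}" M X] op])
  qed
  let ?Sig = "sum_topology (\<lambda>k. product_topology (\<lambda>i. prod_topology M X) {..<k}) UNIV"
  have "openin ?Sig (Pair j ` Og)"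
    using open_map_component_injection[of j UNIV "\<lambda>k. product_topology (\<lambda>i. prod_topology M X) {..<k}"] opO
    unfolding open_map_def by blast
  then have opT: "openin ?LT (Pair j ` Og \<inter> {(k, f). inj_on (fst \<circ> f) {..<k}})"
    unfolding labelled_tuples_def openin_subtopology by blast
  have zT: "z \<in> Pair j ` Og \<inter> {(k, f). inj_on (fst \<circ> f) {..<k}}"
  proof -
    have fT: "f \<in> topspace ?P" using fP by simp
    have "\<forall>i\<in>Nf. snd (f i) \<in> topspace X - {x0}" using fP by (auto simp: Nf_def PiE_iff mem_Times_iff)
    then have "f \<in> Og" using fT by (simp add: Og_def)
    then show ?thesis using zjf inj by auto
  qed
  have sub: "Pair j ` Og \<inter> {(k, f). inj_on (fst \<circ> f) {..<k}} \<subseteq> ?S"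
  proof
    fix w assume w: "w \<in> Pair j ` Og \<inter> {(k, f). inj_on (fst \<circ> f) {..<k}}"
    then obtain g where wg: "w = (j, g)" "g \<in> Og" and injg: "inj_on (fst \<circ> g) {..<j}" by auto
    have gP: "g \<in> topspace ?P" using wg by (simp add: Og_def)
    have "Nf \<subseteq> {i. i < j \<and> snd (g i) \<noteq> x0}" using wg(2) by (auto simp: Og_def Nf_def)
    then have "card Nf \<le> card {i. i < j \<and> snd (g i) \<noteq> x0}" by (intro card_mono) auto
    moreover have "card (conf_of x0 (j, f)) = card Nf" using card_conf_of[OF inj] by (simp add: Nf_def)
    ultimately have "k < card (conf_of x0 (j, g))" using kc card_conf_of[OF injg] by simp
    moreover have "w \<in> topspace ?LT" using gP injg wg by (simp add: topspace_LT)
    ultimately show "w \<in> ?S" using wg by simp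
  qed
  show "\<exists>T. openin ?LT T \<and> z \<in> T \<and> T \<subseteq> ?S" using opT zT sub by blast
qed

lemma closed_card_le:
  assumes op: "openin X (topspace X - {x0})"
  shows "closedin (conf_space M X x0) {\<xi> \<in> topspace (conf_space M X x0). card \<xi> \<le> k}"
proof -
  let ?LT = "labelled_tuples M X"
  let ?CS = "conf_space M X x0"
  have ts: "topspace ?CS = conf_of x0 ` topspace ?LT" by (simp add: conf_space_def topspace_qt)
  have "openin ?CS {\<xi> \<in> topspace ?CS. k < card \<xi>}"
  proof -
    have "{z \<in> topspace ?LT. conf_of x0 z \<in> {\<xi> \<in> topspace ?CS. k < card \<xi>}} = {z \<in> topspace ?LT. k < card (conf_of x0 z)}"
      using ts by auto
    then show ?thesis using open_card_gt[OF op, of M k] unfolding conf_space_def openin_qt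
      using ts by (auto simp: conf_space_def)
  qed
  moreover have "topspace ?CS - {\<xi> \<in> topspace ?CS. card \<xi> \<le> k} = {\<xi> \<in> topspace ?CS. k < card \<xi>}" by auto
  ultimately show ?thesis by (simp add: closedin_def)
qed

lemma quotient_CF:
  assumes op: "openin X (topspace X - {x0})"
  shows "quotient_map (subtopology (labelled_tuples M X) {z \<in> topspace (labelled_tuples M X). card (conf_of x0 z) \<le> k})
           (conf_filt M X x0 k) (conf_of x0)"
  unfolding conf_filt_def
proof (rule quotient_map_restriction)
  show "quotient_map (labelled_tuples M X) (conf_space M X x0) (conf_of x0)"
    unfolding conf_space_def by (rule quotient_map_qt)
  show "{x \<in> topspace (labelled_tuples M X). conf_of x0 x \<in> {\<xi> \<in> topspace (conf_space M X x0). card \<xi> \<le> k}}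
      = {z \<in> topspace (labelled_tuples M X). card (conf_of x0 z) \<le> k}"
    by (auto simp: conf_space_def topspace_qt)
  show "openin (conf_space M X x0) {\<xi> \<in> topspace (conf_space M X x0). card \<xi> \<le> k} \<or>
    closedin (conf_space M X x0) {\<xi> \<in> topspace (conf_space M X x0). card \<xi> \<le> k}"
    using closed_card_le[OF op] by blast
qed

lemma dlt_eq: "dlt n = (\<lambda>\<xi>. if card \<xi> = n then Some \<xi> else None)"
  by (simp add: dlt_def fun_eq_iff)

lemma into_V:
  assumes n: "1 \<le> n" and g: "continuous_map Z (labelled_tuples M X) g"
    and c: "\<And>z. z \<in> topspace Z \<Longrightarrow> card (conf_of x0 (g z)) \<le> n"
  shows "continuous_map Z (wedge_V M X x0) (\<lambda>z. dlt n (conf_of x0 (g z)))"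
proof -
  have c1: "continuous_map Z (conf_space M X x0) (conf_of x0 \<circ> g)"
    using continuous_map_compose[OF g quotient_imp_continuous_map[OF quotient_map_qt]]
    by (simp add: conf_space_def)
  have c2: "continuous_map Z (conf_filt M X x0 n) (conf_of x0 \<circ> g)"
    unfolding conf_filt_def continuous_map_in_subtopology
    using c1 c continuous_map_funspace[OF c1] by (auto simp: Pi_iff)
  have c3: "continuous_map (conf_filt M X x0 n) (conf_quot M X x0 n) (dlt n)"
    unfolding conf_quot_def dlt_eq by (rule quotient_imp_continuous_map[OF quotient_map_qt])
  have c4: "continuous_map (conf_quot M X x0 n) (sum_topology (conf_quot M X x0) {1..}) (\<lambda>v. (n, v))"
    using n by (intro continuous_map_component_injection) simp
  have c5: "continuous_map (sum_topology (conf_quot M X x0) {1..}) (wedge_V M X x0) snd"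
    unfolding wedge_V_def by (rule quotient_imp_continuous_map[OF quotient_map_qt])
  have "continuous_map Z (wedge_V M X x0) (snd \<circ> ((\<lambda>v. (n, v)) \<circ> (dlt n \<circ> (conf_of x0 \<circ> g))))"
    using continuous_map_compose[OF continuous_map_compose[OF continuous_map_compose[OF c2 c3] c4] c5] .
  then show ?thesis by (simp add: o_def)
qed

lemma cont_smash: "continuous_map (prod_topology Y Y') (smash Y Y') smash_map"
  unfolding smash_def by (rule quotient_imp_continuous_map[OF quotient_map_qt])

lemma cm_tuple_proj:
  assumes "i < j"
  shows "continuous_map (prod_topology T (subtopology (product_topology (\<lambda>i. prod_topology M X) {..<j}) S))
           (prod_topology M X) (\<lambda>z. snd z i)"
  using continuous_map_compose[OF continuous_map_snd
      continuous_map_from_subtopology[OF continuous_map_product_projection[of i "{..<j}" "\<lambda>i. prod_topology M X"]]]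
    assms by (simp add: o_def)

lemma cont_sel:
  fixes a :: "real \<Rightarrow> 'x \<Rightarrow> 'x"
  assumes ca: "continuous_map (prod_topology (top_of_set {0..1}) X) X (\<lambda>z. a (fst z) (snd z))"
    and x0: "x0 \<in> topspace X" and Sinj: "\<And>f. f \<in> S \<Longrightarrow> inj_on (fst \<circ> f) {..<j}"
  shows "continuous_map (prod_topology (top_of_set {0..1}) (subtopology (product_topology (\<lambda>i. prod_topology M X) {..<j}) S))
           (labelled_tuples M X) (\<lambda>z. (j, restrict (sel (a (fst z)) x0 (snd z) I J) {..<j}))"
proof -
  let ?Z = "prod_topology (top_of_set {0..1::real}) (subtopology (product_topology (\<lambda>i. prod_topology M X) {..<j}) S)"
  have comp: "continuous_map ?Z (prod_topology M X) (\<lambda>z. sel (a (fst z)) x0 (snd z) I J i)" if i: "i < j" for i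
  proof -
    have p: "continuous_map ?Z (prod_topology M X) (\<lambda>z. snd z i)" by (rule cm_tuple_proj[OF i])
    have p1: "continuous_map ?Z M (\<lambda>z. fst (snd z i))"
      using continuous_map_compose[OF p continuous_map_fst] by (simp add: o_def)
    have p2: "continuous_map ?Z X (\<lambda>z. snd (snd z i))"
      using continuous_map_compose[OF p continuous_map_snd] by (simp add: o_def)
    have pa: "continuous_map ?Z X (\<lambda>z. a (fst z) (snd (snd z i)))"
    proof -
      have "continuous_map ?Z (prod_topology (top_of_set {0..1}) X) (\<lambda>z. (fst z, snd (snd z i)))"
        by (intro continuous_map_pairedI continuous_map_fst p2)
      from continuous_map_compose[OF this ca] show ?thesis by (simp add: o_def)
    qed
    show ?thesis
    proof (cases "i \<in> I")
      case True
      show ?thesis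
      proof (cases "i \<in> J")
        case True
        with \<open>i \<in> I\<close> show ?thesis unfolding sel_def by (simp add: continuous_map_pairedI p1 pa)
      next
        case False
        with \<open>i \<in> I\<close> show ?thesis unfolding sel_def by (simp add: continuous_map_pairedI p1 p2 p)
      qed
    next
      case False
      then show ?thesis unfolding sel_def using x0 by (simp add: continuous_map_pairedI p1)
    qed
  qed
  have h: "continuous_map ?Z (product_topology (\<lambda>i. prod_topology M X) {..<j})
             (\<lambda>z. restrict (sel (a (fst z)) x0 (snd z) I J) {..<j})"
    unfolding continuous_map_componentwise using comp by auto
  have hs: "continuous_map ?Z (sum_topology (\<lambda>k. product_topology (\<lambda>i. prod_topology M X) {..<k}) UNIV)
             (\<lambda>z. (j, restrict (sel (a (fst z)) x0 (snd z) I J) {..<j}))"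
    using continuous_map_compose[OF h continuous_map_component_injection[of j UNIV "\<lambda>k. product_topology (\<lambda>i. prod_topology M X) {..<k}"]]
    by (simp add: o_def)
  have inj: "inj_on (fst \<circ> restrict (sel (a (fst z)) x0 (snd z) I J) {..<j}) {..<j}" if "z \<in> topspace ?Z" for z
  proof -
    have "snd z \<in> topspace (subtopology (product_topology (\<lambda>i. prod_topology M X) {..<j}) S)"
      using that by (simp only: topspace_prod_topology mem_Times_iff)
    then have "snd z \<in> S" by (simp only: topspace_subtopology IntD2)
    then have "inj_on (fst \<circ> snd z) {..<j}" by (rule Sinj)
    moreover have "\<forall>i\<in>{..<j}. (fst \<circ> restrict (sel (a (fst z)) x0 (snd z) I J) {..<j}) i = (fst \<circ> snd z) i"
      unfolding o_def restrict_def sel_def by simp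
    ultimately show ?thesis using inj_on_cong[of "{..<j}" "fst \<circ> restrict (sel (a (fst z)) x0 (snd z) I J) {..<j}" "fst \<circ> snd z"]
      by blast
  qed
  show ?thesis
    unfolding labelled_tuples_def continuous_map_in_subtopology
  proof (intro conjI hs)
    show "(\<lambda>z. (j, restrict (sel (a (fst z)) x0 (snd z) I J) {..<j})) \<in> topspace ?Z \<rightarrow> {(k, f). inj_on (fst \<circ> f) {..<k}}"
    proof
      fix z assume "z \<in> topspace ?Z"
      from inj[OF this] show "(j, restrict (sel (a (fst z)) x0 (snd z) I J) {..<j}) \<in> {(k, f). inj_on (fst \<circ> f) {..<k}}"
        by simp
    qed
  qed
qed

lemma cont_tterm:
  fixes a b :: "real \<Rightarrow> 'x \<Rightarrow> 'x"
  assumes ca: "continuous_map (prod_topology (top_of_set {0..1}) X) X (\<lambda>z. a (fst z) (snd z))"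
    and cb: "continuous_map (prod_topology (top_of_set {0..1}) X) X (\<lambda>z. b (fst z) (snd z))"
    and x0: "x0 \<in> topspace X" and Sinj: "\<And>f. f \<in> S \<Longrightarrow> inj_on (fst \<circ> f) {..<j}"
    and c: "c \<in> Lset j k"
  shows "continuous_map (prod_topology (top_of_set {0..1}) (subtopology (product_topology (\<lambda>i. prod_topology M X) {..<j}) S))
           (smash (wedge_V M X x0) (wedge_V M X x0)) (\<lambda>z. tterm (a (fst z)) (b (fst z)) x0 j (snd z) c)"
proof -
  let ?Z = "prod_topology (top_of_set {0..1::real}) (subtopology (product_topology (\<lambda>i. prod_topology M X) {..<j}) S)"
  obtain I J where cIJ: "c = (I, J)" by (cases c)
  have I: "I \<subseteq> {..<j}" "I \<noteq> {}" and J: "J \<subseteq> {..<j}" "J \<noteq> {}" using c cIJ by (auto simp: Lset_def)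
  have fin: "finite I" "finite J" using I J finite_subset by blast+
  have n1: "1 \<le> card I" "1 \<le> card J" using fin I J by (auto simp: Suc_le_eq card_gt_0_iff)
  have zS: "snd z \<in> S" if "z \<in> topspace ?Z" for z
  proof -
    have "snd z \<in> topspace (subtopology (product_topology (\<lambda>i. prod_topology M X) {..<j}) S)"
      using that by (simp only: topspace_prod_topology mem_Times_iff)
    then show "snd z \<in> S" by (simp only: topspace_subtopology IntD2)
  qed
  have bound: "card (conf_of x0 (j, restrict (sel F x0 (snd z) I' J') {..<j})) \<le> card I'"
    if "z \<in> topspace ?Z" "I' \<subseteq> {..<j}" "finite I'" for z F I' J'
  proof -
    have "card (conf_of x0 (j, restrict (sel F x0 (snd z) I' J') {..<j})) =
          card {i \<in> I'. (if i \<in> J' then F (snd (snd z i)) else snd (snd z i)) \<noteq> x0}"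
      unfolding conf_of_restrict using card_conf_sel[OF that(2) Sinj[OF zS[OF that(1)]]] .
    also have "\<dots> \<le> card I'" using that(3) by (intro card_mono) auto
    finally show ?thesis .
  qed
  have vA: "continuous_map ?Z (wedge_V M X x0) (\<lambda>z. dlt (card I) (conf_of x0 (j, restrict (sel (a (fst z)) x0 (snd z) I J) {..<j})))"
  proof -
    have gA: "continuous_map ?Z (labelled_tuples M X) (\<lambda>z. (j, restrict (sel (a (fst z)) x0 (snd z) I J) {..<j}))"
      by (rule cont_sel[OF ca x0 Sinj])
    show ?thesis by (rule into_V[OF n1(1) gA]) (rule bound, assumption, rule I(1), rule fin(1))
  qed
  have vB: "continuous_map ?Z (wedge_V M X x0) (\<lambda>z. dlt (card J) (conf_of x0 (j, restrict (sel (b (fst z)) x0 (snd z) J I) {..<j})))"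
  proof -
    have gB: "continuous_map ?Z (labelled_tuples M X) (\<lambda>z. (j, restrict (sel (b (fst z)) x0 (snd z) J I) {..<j}))"
      by (rule cont_sel[OF cb x0 Sinj])
    show ?thesis by (rule into_V[OF n1(2) gB]) (rule bound, assumption, rule J(1), rule fin(2))
  qed
  have "continuous_map ?Z (prod_topology (wedge_V M X x0) (wedge_V M X x0))
     (\<lambda>z. (dlt (card I) (conf_of x0 (j, restrict (sel (a (fst z)) x0 (snd z) I J) {..<j})),
           dlt (card J) (conf_of x0 (j, restrict (sel (b (fst z)) x0 (snd z) J I) {..<j}))))"
    by (rule continuous_map_pairedI[OF vA vB])
  from continuous_map_compose[OF this cont_smash] show ?thesis
    by (simp add: o_def tterm_def cIJ)
qed

lemma mset_restrict_map:
  "mset (filter P (map (restrict g {..<N}) [0..<N])) = filter_mset P (image_mset g (mset_set {..<N}))"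
proof -
  have "map (restrict g {..<N}) [0..<N] = map g [0..<N]" by (intro map_cong) auto
  then show ?thesis by (simp only: mset_filter mset_map mset_upt atLeast0LessThan)
qed

lemma cont_Hk_tuple:
  fixes a b :: "real \<Rightarrow> 'x \<Rightarrow> 'x" and M :: "'m topology"
  assumes ca: "continuous_map (prod_topology (top_of_set {0..1}) X) X (\<lambda>z. a (fst z) (snd z))"
    and cb: "continuous_map (prod_topology (top_of_set {0..1}) X) X (\<lambda>z. b (fst z) (snd z))"
    and x0: "x0 \<in> topspace X" and Sinj: "\<And>f. f \<in> S \<Longrightarrow> inj_on (fst \<circ> f) {..<j}"
    and Scard: "\<And>f. f \<in> S \<Longrightarrow> card (conf_of x0 (j, f)) \<le> k"
    and ab: "\<And>t. t \<in> {0..1} \<Longrightarrow> a t x0 = x0"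
  shows "continuous_map (prod_topology (top_of_set {0..1}) (subtopology (product_topology (\<lambda>i. prod_topology M X) {..<j}) S))
           (SP (smash (wedge_V M X x0) (wedge_V M X x0)) None)
           (\<lambda>z. Hk (a (fst z)) (b (fst z)) x0 (dlt k (conf_of x0 (j, snd z))))"
proof -
  let ?Z = "prod_topology (top_of_set {0..1::real}) (subtopology (product_topology (\<lambda>i. prod_topology M X) {..<j}) S)"
  let ?Y = "smash (wedge_V M X x0) (wedge_V M X x0)"
  let ?L = "Lset j k"
  define N where "N = card ?L"
  obtain e where e: "bij_betw e {0..<N} ?L" using ex_bij_betw_nat_finite[OF finite_Lset] unfolding N_def by blast
  have eL: "e i \<in> ?L" if "i < N" for i using e that by (auto simp: bij_betw_def)
  define F where "F (z :: real \<times> (nat \<Rightarrow> 'm \<times> 'x)) = (N, restrict (\<lambda>i. tterm (a (fst z)) (b (fst z)) x0 j (snd z) (e i)) {..<N})" for z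
  have cF: "continuous_map ?Z (sum_topology (\<lambda>n. product_topology (\<lambda>i. ?Y) {..<n}) UNIV) F"
  proof -
    have "continuous_map ?Z (product_topology (\<lambda>i. ?Y) {..<N})
            (\<lambda>z. restrict (\<lambda>i. tterm (a (fst z)) (b (fst z)) x0 j (snd z) (e i)) {..<N})"
      unfolding continuous_map_componentwise
      using cont_tterm[OF ca cb x0 Sinj eL] by auto
    from continuous_map_compose[OF this continuous_map_component_injection[of N UNIV "\<lambda>n. product_topology (\<lambda>i. ?Y) {..<n}"]]
    show ?thesis unfolding F_def[abs_def] by (simp add: o_def)
  qed
  have cq: "continuous_map (sum_topology (\<lambda>n. product_topology (\<lambda>i. ?Y) {..<n}) UNIV) (SP ?Y None)
              (\<lambda>(n, f). mset (filter (\<lambda>y. y \<noteq> None) (map f [0..<n])))"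
    unfolding SP_def by (rule quotient_imp_continuous_map[OF quotient_map_qt])
  have cc: "continuous_map ?Z (SP ?Y None) ((\<lambda>(n, f). mset (filter (\<lambda>y. y \<noteq> None) (map f [0..<n]))) \<circ> F)"
    by (rule continuous_map_compose[OF cF cq])
  show ?thesis
  proof (rule continuous_map_eq[OF cc])
    fix z assume z: "z \<in> topspace ?Z"
    have t: "fst z \<in> {0..1}" using z by (simp only: topspace_prod_topology mem_Times_iff topspace_subtopology) simp
    have sz: "snd z \<in> S"
    proof -
      have "snd z \<in> topspace (subtopology (product_topology (\<lambda>i. prod_topology M X) {..<j}) S)"
        using z by (simp only: topspace_prod_topology mem_Times_iff)
      then show "snd z \<in> S" by (simp only: topspace_subtopology IntD2)
    qed
    let ?g = "tterm (a (fst z)) (b (fst z)) x0 j (snd z)"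
    have "((\<lambda>(n, f). mset (filter (\<lambda>y. y \<noteq> None) (map f [0..<n]))) \<circ> F) z
        = mset (filter (\<lambda>y. y \<noteq> None) (map (restrict (\<lambda>i. ?g (e i)) {..<N}) [0..<N]))"
      by (simp only: F_def o_apply prod.case)
    also have "\<dots> = filter_mset (\<lambda>y. y \<noteq> None) (image_mset (\<lambda>i. ?g (e i)) (mset_set {..<N}))"
      by (rule mset_restrict_map)
    also have "(\<lambda>i. ?g (e i)) = ?g \<circ> e" by (simp add: o_def)
    also have "image_mset (?g \<circ> e) (mset_set {..<N}) = image_mset ?g (image_mset e (mset_set {..<N}))"
      by (simp add: image_mset.compositionality)
    also have "image_mset e (mset_set {..<N}) = mset_set ?L"
    proof -
      have "inj_on e {..<N}" "e ` {..<N} = ?L" using e by (auto simp: bij_betw_def atLeast0LessThan)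
      then show ?thesis by (simp add: image_mset_mset_set)
    qed
    also have "filter_mset (\<lambda>y. y \<noteq> None) (image_mset ?g (mset_set ?L))
        = Hk (a (fst z)) (b (fst z)) x0 (dlt k (conf_of x0 (j, snd z)))"
      by (rule comb_main[symmetric]) (use Sinj[OF sz] Scard[OF sz] ab[OF t] in auto)
    finally show "((\<lambda>(n, f). mset (filter (\<lambda>y. y \<noteq> None) (map f [0..<n]))) \<circ> F) z
        = Hk (a (fst z)) (b (fst z)) x0 (dlt k (conf_of x0 (j, snd z)))" .
  qed
qed



lemma I_loc: "locally_compact_space (top_of_set {0..1::real})"
  by (rule compact_imp_locally_compact_space, rule compact_space_subtopology) simp

lemma I_haus: "Hausdorff_space (top_of_set {0..1::real})"
  by (rule Hausdorff_space_subtopology) simp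

lemma qprod: "quotient_map X Y f \<Longrightarrow>
  quotient_map (prod_topology (top_of_set {0..1::real}) X) (prod_topology (top_of_set {0..1}) Y) (\<lambda>(x, y). (x, f y))"
  using quotient_map_prod_right[OF I_loc] I_haus by blast

lemma main_cont:
  fixes a b :: "real \<Rightarrow> 'x \<Rightarrow> 'x" and M :: "'m topology"
  assumes ca: "continuous_map (prod_topology (top_of_set {0..1}) X) X (\<lambda>z. a (fst z) (snd z))"
    and cb: "continuous_map (prod_topology (top_of_set {0..1}) X) X (\<lambda>z. b (fst z) (snd z))"
    and x0: "x0 \<in> topspace X" and op: "openin X (topspace X - {x0})"
    and ab: "\<And>t. t \<in> {0..1} \<Longrightarrow> a t x0 = x0"
  shows "continuous_map (prod_topology (top_of_set {0..1}) (wedge_V M X x0))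
           (SP (smash (wedge_V M X x0) (wedge_V M X x0)) None)
           (\<lambda>z. Hk (a (fst z)) (b (fst z)) x0 (snd z))"
proof -
  let ?I = "top_of_set {0..1::real}"
  let ?SP = "SP (smash (wedge_V M X x0) (wedge_V M X x0)) None"
  let ?G = "\<lambda>z. Hk (a (fst z)) (b (fst z)) x0 (snd z)"
  let ?LT = "labelled_tuples M X"
  let ?P = "\<lambda>k. product_topology (\<lambda>i. prod_topology M X) {..<k}"
  have step4: "continuous_map (prod_topology ?I (subtopology ?LT {z \<in> topspace ?LT. card (conf_of x0 z) \<le> k})) ?SP
                 (\<lambda>z. Hk (a (fst z)) (b (fst z)) x0 (dlt k (conf_of x0 (snd z))))" for k
  proof -
    define Sj where "Sj j = {f. (j, f) \<in> {(k, f). inj_on (fst \<circ> f) {..<k}} \<inter> {z \<in> topspace ?LT. card (conf_of x0 z) \<le> k}}" for j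
    have eq: "subtopology ?LT {z \<in> topspace ?LT. card (conf_of x0 z) \<le> k} = sum_topology (\<lambda>j. subtopology (?P j) (Sj j)) UNIV"
    proof -
      have "{(k, f). inj_on (fst \<circ> f) {..<k}} \<inter> {z \<in> topspace ?LT. card (conf_of x0 z) \<le> k} = Sigma UNIV Sj"
        by (auto simp: Sj_def)
      then show ?thesis
        unfolding labelled_tuples_def subtopology_subtopology
        by (simp add: subtopology_sum_topology)
    qed
    show ?thesis unfolding eq
    proof (rule cont_prod_sum)
      fix j :: nat
      have Sinj: "inj_on (fst \<circ> f) {..<j}" if "f \<in> Sj j" for f using that by (simp add: Sj_def)
      have Scard: "card (conf_of x0 (j, f)) \<le> k" if "f \<in> Sj j" for f using that by (simp add: Sj_def)
      show "continuous_map (prod_topology ?I (subtopology (?P j) (Sj j))) ?SP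
          (\<lambda>z. Hk (a (fst (fst z, (j, snd z)))) (b (fst (fst z, (j, snd z)))) x0 (dlt k (conf_of x0 (snd (fst z, (j, snd z))))))"
        using cont_Hk_tuple[OF ca cb x0 Sinj Scard ab, of "Sj j" M] by simp
    qed
  qed
  have step3: "continuous_map (prod_topology ?I (conf_filt M X x0 k)) ?SP
                 (\<lambda>z. Hk (a (fst z)) (b (fst z)) x0 (dlt k (snd z)))" for k
  proof (rule continuous_compose_quotient_map[OF qprod[OF quotient_CF[OF op]]])
    show "continuous_map (prod_topology ?I (subtopology ?LT {z \<in> topspace ?LT. card (conf_of x0 z) \<le> k})) ?SP
        ((\<lambda>z. Hk (a (fst z)) (b (fst z)) x0 (dlt k (snd z))) \<circ> (\<lambda>(x, y). (x, conf_of x0 y)))"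
      using step4[of k] by (simp add: o_def case_prod_unfold)
  qed
  have step2: "continuous_map (prod_topology ?I (conf_quot M X x0 k)) ?SP ?G" for k
    unfolding conf_quot_def
  proof (rule continuous_compose_quotient_map[OF qprod[OF quotient_map_qt]])
    show "continuous_map (prod_topology ?I (conf_filt M X x0 k)) ?SP (?G \<circ> (\<lambda>(x, y). (x, if card y = k then Some y else None)))"
      using step3[of k] by (simp add: o_def case_prod_unfold dlt_def)
  qed
  have step1: "continuous_map (prod_topology ?I (sum_topology (conf_quot M X x0) {1..})) ?SP (?G \<circ> (\<lambda>(x, y). (x, snd y)))"
    by (rule cont_prod_sum) (use step2 in \<open>simp add: o_def case_prod_unfold\<close>)
  have qW: "quotient_map (prod_topology ?I (sum_topology (conf_quot M X x0) {1..})) (prod_topology ?I (wedge_V M X x0))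
      (\<lambda>(x, y). (x, snd y))"
    unfolding wedge_V_def by (rule qprod[OF quotient_map_qt])
  show ?thesis
    by (rule continuous_compose_quotient_map[OF qW step1])
qed

lemma topspace_V_Some:
  assumes "Some \<xi> \<in> topspace (wedge_V M X x0)"
  shows "finite \<xi> \<and> (\<forall>p\<in>\<xi>. snd p \<in> topspace X \<and> snd p \<noteq> x0)"
proof -
  obtain k where "(k, Some \<xi>) \<in> topspace (sum_topology (conf_quot M X x0) {1..})"
    using assms unfolding wedge_V_def topspace_qt by (auto simp: image_iff)
  then have "Some \<xi> \<in> topspace (conf_quot M X x0 k)" by simp
  then obtain \<eta> where "\<eta> \<in> topspace (conf_filt M X x0 k)" "Some \<xi> = (if card \<eta> = k then Some \<eta> else None)"
    unfolding conf_quot_def topspace_qt by blast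
  then have "\<xi> \<in> topspace (conf_space M X x0)"
    by (auto simp: conf_filt_def split: if_splits)
  then obtain z where z: "z \<in> topspace (labelled_tuples M X)" "\<xi> = conf_of x0 z"
    unfolding conf_space_def topspace_qt by blast
  obtain j f where zjf: "z = (j, f)" by (cases z)
  have fP: "f \<in> (\<Pi>\<^sub>E i\<in>{..<j}. topspace M \<times> topspace X)" using z zjf by (simp add: topspace_LT)
  have xi: "\<xi> = f ` {i. i < j \<and> snd (f i) \<noteq> x0}" using z zjf by (simp add: conf_of_eq)
  have "\<forall>p\<in>\<xi>. snd p \<in> topspace X \<and> snd p \<noteq> x0"
  proof
    fix p assume "p \<in> \<xi>"
    then obtain i where i: "i < j" "snd (f i) \<noteq> x0" "p = f i" using xi by blast
    then have "f i \<in> topspace M \<times> topspace X" using fP by (auto simp: PiE_iff)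
    then show "snd p \<in> topspace X \<and> snd p \<noteq> x0" using i by (auto simp: mem_Times_iff)
  qed
  moreover have "finite \<xi>" using xi by simp
  ultimately show ?thesis by blast
qed

lemma nsphere_open_delete:
  "openin (nsphere d) (topspace (nsphere d) - {x0})"
proof -
  have "Hausdorff_space (powertop_real (UNIV :: nat set))"
    by (subst Hausdorff_space_product_topology) (rule disjI2, simp)
  then have "Hausdorff_space (nsphere d)" unfolding nsphere by (rule Hausdorff_space_subtopology)
  then have "t1_space (nsphere d)" by (rule Hausdorff_imp_t1_space)
  then show ?thesis using t1_space_openin_delete_alt[THEN iffD1, rule_format, of "nsphere d" "topspace (nsphere d)" x0] by simp
qed

theorem proposition2p3:
  fixes M :: "'m topology" and n l :: nat and x0 :: "nat \<Rightarrow> real"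
  assumes "topological_manifold M n"
    and "l \<ge> 1"
    and "x0 \<in> topspace (nsphere (2 * l))"
  shows "homotopic_with (\<lambda>h. h None = {#})
           (wedge_V M (nsphere (2 * l)) x0)
           (SP (smash (wedge_V M (nsphere (2 * l)) x0) (wedge_V M (nsphere (2 * l)) x0)) None)
           Phi_map Psi_map"
proof -
  let ?d = "2 * l"
  let ?X = "nsphere ?d"
  let ?V = "wedge_V M ?X x0"
  have d: "1 \<le> ?d" using assms(2) by simp
  obtain \<alpha> \<beta> :: "real \<Rightarrow> (nat \<Rightarrow> real) \<Rightarrow> (nat \<Rightarrow> real)" where
    ca: "continuous_map (prod_topology (top_of_set {0..1}) ?X) ?X (\<lambda>z. \<alpha> (fst z) (snd z))" and
    cb: "continuous_map (prod_topology (top_of_set {0..1}) ?X) ?X (\<lambda>z. \<beta> (fst z) (snd z))" and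
    a0: "\<And>x. x \<in> topspace ?X \<Longrightarrow> \<alpha> 0 x = x" and
    b0: "\<And>x. x \<in> topspace ?X \<Longrightarrow> \<beta> 0 x = x" and
    ab: "\<And>t. t \<in> {0..1} \<Longrightarrow> \<alpha> t x0 = x0" and
    k1: "\<And>x. x \<in> topspace ?X \<Longrightarrow> \<alpha> 1 x = x0 \<or> \<beta> 1 x = x0"
    using sphere_homotopy[OF assms(3) d] by blast
  have cH: "continuous_map (prod_topology (top_of_set {0..1}) ?V)
      (SP (smash ?V ?V) None) (\<lambda>z. Hk (\<alpha> (fst z)) (\<beta> (fst z)) x0 (snd z))"
    by (rule main_cont[OF ca cb assms(3) nsphere_open_delete ab])
  define h where "h (z :: real \<times> ('m \<times> (nat \<Rightarrow> real)) set option) = (if fst z = 0 then Psi_map (snd z) else if fst z = 1 then Phi_map (snd z)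
                          else Hk (\<alpha> (fst z)) (\<beta> (fst z)) x0 (snd z))" for z
  have h_eq: "Hk (\<alpha> (fst z)) (\<beta> (fst z)) x0 (snd z) = h z"
    if z: "z \<in> topspace (prod_topology (top_of_set {0..1}) ?V)" for z
  proof (cases "snd z")
    case None
    then show ?thesis by (simp add: h_def Hk_def Psi_map_def Phi_map_def)
  next
    case (Some \<xi>)
    have "Some \<xi> \<in> topspace ?V" using z Some by (cases z) auto
    then have fl: "finite \<xi> \<and> (\<forall>p\<in>\<xi>. snd p \<in> topspace ?X \<and> snd p \<noteq> x0)"
      by (rule topspace_V_Some)
    then have fin: "finite \<xi>" and lab: "\<forall>p\<in>\<xi>. snd p \<in> topspace ?X \<and> snd p \<noteq> x0"
      by (rule conjunct1, rule conjunct2)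
    show ?thesis
    proof (cases "fst z = 0")
      case True
      have "Hk (\<alpha> 0) (\<beta> 0) x0 (Some \<xi>) = Psi_map (Some \<xi>)"
        by (rule Hk_0[OF fin]) (use lab a0 b0 in auto)
      then show ?thesis using True Some by (simp add: h_def)
    next
      case False
      show ?thesis
      proof (cases "fst z = 1")
        case True
        have "Hk (\<alpha> 1) (\<beta> 1) x0 (Some \<xi>) = Phi_map (Some \<xi>)"
          by (rule Hk_1[OF fin]) (use lab k1 in auto)
        then show ?thesis using True Some by (simp add: h_def)
      next
        case False
        then show ?thesis using \<open>fst z \<noteq> 0\<close> by (simp add: h_def)
      qed
    qed
  qed
  have ch: "continuous_map (prod_topology (top_of_set {0..1}) ?V) (SP (smash ?V ?V) None) h"
    by (rule continuous_map_eq[OF cH h_eq])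
  have "homotopic_with (\<lambda>h. h None = {#}) ?V (SP (smash ?V ?V) None) Psi_map Phi_map"
    unfolding homotopic_with_def
  proof (intro exI conjI allI ballI)
    show "continuous_map (prod_topology (top_of_set {0..1}) ?V) (SP (smash ?V ?V) None) h" by (rule ch)
    show "h (0, x) = Psi_map x" for x by (simp add: h_def)
    show "h (1, x) = Phi_map x" for x by (simp add: h_def)
    show "(\<lambda>x. h (t, x)) None = {#}" for t by (simp add: h_def Hk_def Psi_map_def Phi_map_def)
  qed
  then show ?thesis by (rule homotopic_with_symD)
qed


end
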